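(* Let $\mathbf{A}$ be a fixed finite $\sigma$-structure. The following are equivalent: (1) $\mathrm{CSP}(\mathbf{A})$ is closed under $\equiv_1$-equivalence, i.e. for all $\sigma$-structures $\mathbf{X}_1\equiv_1\mathbf{X}_2$ we have $\mathbf{X}_1\to\mathbf{A}$ iff $\mathbf{X}_2\to\mathbf{A}$; (2) $\mathrm{SA}^1$ decides $\mathrm{CSP}(\mathbf{A})$; (3) $\mathrm{BLP}$ decides $\mathrm{CSP}(\mathbf{A})$; (4) $\mathbf{A}$ has symmetric polymorphisms of all arities.
   Context: A signature $\sigma$ is a finite set of relation symbols with arities $\operatorname{ar}(R)\ge1$; a $\sigma$-structure $\mathbf{A}$ has finite universe $A$ and non-empty relations $R^\mathbf{A}\subseteq A^{\operatorname{ar}(R)}$. For a tuple $\mathbf{a}$, $a_i$ is its $i$-th entry, $\{\mathbf{a}\}$ its set of entries. $\mathbf{X}\to\mathbf{A}$ means there is a homomorphism, i.e. $h:X\to A$ with $h(\mathbf{x})\in R^\mathbf{A}$ for all $\mathbf{x}\in R^\mathbf{X}$. $\mathrm{CSP}(\mathbf{A})$ is the problem of deciding, for an input $\sigma$-structure $\mathbf{X}$, whether $\mathbf{X}\to\mathbf{A}$. Constraints: $\mathcal{C}_\mathbf{A}=\{R(\mathbf{a}):R\in\sigma,\mathbf{a}\in R^\mathbf{A}\}$ (formal symbols). $\equiv_1$: the factor graph of $\mathbf{A}$ is the bipartite graph on $A\cup\mathcal{C}_\mathbf{A}$ with edges $\{a,R(\mathbf{a})\}$ for $a\in\{\mathbf{a}\}$,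 labelled $(\{i:a_i=a\},R)$. $\delta_0^\mathbf{A}(v)$ is one of two fixed symbols according as $v\in A$ or $v\in\mathcal{C}_\mathbf{A}$; $\delta_j^\mathbf{A}(v)=\{\{(\text{label of }\{v,w\},\delta_{j-1}^\mathbf{A}(w)): w \text{ adjacent to } v\}\}$; $\delta^\mathbf{A}(v)=(\delta^\mathbf{A}_j(v))_{j\ge0}$. $\mathbf{A}\equiv_1\mathbf{B}$ iff $\{\{\delta^\mathbf{A}(v): v\in A\cup\mathcal{C}_\mathbf{A}\}\}=\{\{\delta^\mathbf{B}(v): v\in B\cup\mathcal{C}_\mathbf{B}\}\}$. $\mathrm{BLP}(\mathbf{X},\mathbf{A})$: variables $p_x(a)\in[0,1]$ ($x\in X,a\in A$) and $p_{R(\mathbf{x})}(\mathbf{a})\in[0,1]$ ($R(\mathbf{x})\in\mathcal{C}_\mathbf{X}$, $\mathbf{a}\in A^{\operatorname{ar}(R)}$), with $\sum_a p_x(a)=1$; $p_x(a)=\sum_{\mathbf{a}: a_i=a}p_{R(\mathbf{x})}(\mathbf{a})$ for every $R(\mathbf{x})\in\mathcal{C}_\mathbf{X}$, $a\in A$ and $i$ with $x_i=x$; and $p_{R(\mathbf{x})}(\mathbf{a})=0$ if $\mathbf{a}\notin R^\mathbf{A}$. $\mathrm{SA}^1(\mathbf{X},\mathbf{A})$ is $\mathrm{BLP}(\mathbf{X},\mathbf{A})$ plus the constraints $p_{R(\mathbf{x})}(\mathbf{a})=0$ whenever there are $i,j$ with $x_i=x_j$ and $a_i\ne a_j$. A system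 is feasible if it has a rational solution; $L\in\{\mathrm{BLP},\mathrm{SA}^1\}$ decides $\mathrm{CSP}(\mathbf{A})$ if for every $\sigma$-structure $\mathbf{X}$, feasibility of $L(\mathbf{X},\mathbf{A})$ implies $\mathbf{X}\to\mathbf{A}$. A $k$-ary polymorphism of $\mathbf{A}$ is $f:A^k\to A$ such that applying $f$ coordinatewise to any $k$ tuples of $R^\mathbf{A}$ gives a tuple of $R^\mathbf{A}$, for all $R\in\sigma$; it is symmetric if $f(a_1,\dots,a_k)=f(a_{\rho(1)},\dots,a_{\rho(k)})$ for all permutations $\rho$ of $[k]$. "Of all arities" means for every $k\ge1$. *)

theory Defs
  imports Complex_Main "HOL-Library.Multiset" "HOL-Combinatorics.Permutations"
begin

text \<open>A structure has a universe and, for every symbol,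
  a set of tuples (represented as lists; tuple positions are indexed 0,...,ar R - 1).\<close>

record ('a, 'r) struc =
  univ :: "'a set"
  rels :: "'r \<Rightarrow> 'a list set"

definition is_signature :: "'r set \<Rightarrow> ('r \<Rightarrow> nat) \<Rightarrow> bool" where
  "is_signature sig ar \<longleftrightarrow> finite sig \<and> (\<forall>R\<in>sig. ar R \<ge> 1)"

definition is_struc :: "'r set \<Rightarrow> ('r \<Rightarrow> nat) \<Rightarrow> ('a, 'r) struc \<Rightarrow> bool" where
  "is_struc sig ar S \<longleftrightarrow> finite (univ S) \<and>
     (\<forall>R\<in>sig. rels S R \<noteq> {} \<and> (\<forall>t\<in>rels S R. length t = ar R \<and> set t \<subseteq> univ S))"

definition hom_exists :: "'r set \<Rightarrow> ('x, 'r) struc \<Rightarrow> ('a, 'r) struc \<Rightarrow> bool" where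
  "hom_exists sig X A \<longleftrightarrow>
     (\<exists>h. h ` univ X \<subseteq> univ A \<and> (\<forall>R\<in>sig. \<forall>t\<in>rels X R. map h t \<in> rels A R))"

definition constraints :: "'r set \<Rightarrow> ('a, 'r) struc \<Rightarrow> ('r \<times> 'a list) set" where
  "constraints sig S = {(R, t). R \<in> sig \<and> t \<in> rels S R}"

definition edge_label :: "('r \<times> 'a list) \<Rightarrow> 'a \<Rightarrow> nat set \<times> 'r" where
  "edge_label c a = ({i. i < length (snd c) \<and> snd c ! i = a}, fst c)"

text \<open>Colours produced by colour refinement on the factor graph.\<close>
datatype 'r color = Base bool | Refine "((nat set \<times> 'r) \<times> 'r color) multiset"

text \<open>delta_j of a vertex of the factor graph; vertices are Inl a (elements) and
  Inr c (constraints).\<close>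
fun delta :: "'r set \<Rightarrow> ('a, 'r) struc \<Rightarrow> nat \<Rightarrow> 'a + ('r \<times> 'a list) \<Rightarrow> 'r color" where
  "delta sig S 0 v = Base (isl v)"
| "delta sig S (Suc j) (Inl a) =
     Refine (image_mset (\<lambda>c. (edge_label c a, delta sig S j (Inr c)))
       (mset_set {c \<in> constraints sig S. a \<in> set (snd c)}))"
| "delta sig S (Suc j) (Inr c) =
     Refine (image_mset (\<lambda>a. (edge_label c a, delta sig S j (Inl a)))
       (mset_set (set (snd c))))"

definition fg_vertices :: "'r set \<Rightarrow> ('a, 'r) struc \<Rightarrow> ('a + ('r \<times> 'a list)) set" where
  "fg_vertices sig S = Inl ` univ S \<union> Inr ` constraints sig S"

definition equiv1 :: "'r set \<Rightarrow> ('a, 'r) struc \<Rightarrow> ('b, 'r) struc \<Rightarrow> bool" where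
  "equiv1 sig A B \<longleftrightarrow>
     image_mset (\<lambda>v j. delta sig A j v) (mset_set (fg_vertices sig A)) =
     image_mset (\<lambda>v j. delta sig B j v) (mset_set (fg_vertices sig B))"

definition tuples :: "('a, 'r) struc \<Rightarrow> nat \<Rightarrow> 'a list set" where
  "tuples A n = {t. length t = n \<and> set t \<subseteq> univ A}"

text \<open>Rational feasibility of BLP(X,A).  px x a = p_x(a),  pc R xs t = p_{R(xs)}(t).\<close>
definition blp_system ::
  "'r set \<Rightarrow> ('r \<Rightarrow> nat) \<Rightarrow> ('x, 'r) struc \<Rightarrow> ('a, 'r) struc \<Rightarrow>
   ('x \<Rightarrow> 'a \<Rightarrow> rat) \<Rightarrow> ('r \<Rightarrow> 'x list \<Rightarrow> 'a list \<Rightarrow> rat) \<Rightarrow> bool" where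
  "blp_system sig ar X A px pc \<longleftrightarrow>
     (\<forall>x\<in>univ X. \<forall>a\<in>univ A. 0 \<le> px x a \<and> px x a \<le> 1) \<and>
     (\<forall>(R, xs)\<in>constraints sig X. \<forall>t\<in>tuples A (ar R). 0 \<le> pc R xs t \<and> pc R xs t \<le> 1) \<and>
     (\<forall>x\<in>univ X. (\<Sum>a\<in>univ A. px x a) = 1) \<and>
     (\<forall>(R, xs)\<in>constraints sig X. \<forall>a\<in>univ A. \<forall>i<length xs.
        px (xs ! i) a = (\<Sum>t\<in>{t\<in>tuples A (ar R). t ! i = a}. pc R xs t)) \<and>
     (\<forall>(R, xs)\<in>constraints sig X. \<forall>t\<in>tuples A (ar R). t \<notin> rels A R \<longrightarrow> pc R xs t = 0)"

definition blp_feasible :: "'r set \<Rightarrow> ('r \<Rightarrow> nat) \<Rightarrow> ('x, 'r) struc \<Rightarrow> ('a, 'r) struc \<Rightarrow> bool" where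
  "blp_feasible sig ar X A \<longleftrightarrow> (\<exists>px pc. blp_system sig ar X A px pc)"

definition sa1_feasible :: "'r set \<Rightarrow> ('r \<Rightarrow> nat) \<Rightarrow> ('x, 'r) struc \<Rightarrow> ('a, 'r) struc \<Rightarrow> bool" where
  "sa1_feasible sig ar X A \<longleftrightarrow> (\<exists>px pc. blp_system sig ar X A px pc \<and>
     (\<forall>(R, xs)\<in>constraints sig X. \<forall>t\<in>tuples A (ar R).
        (\<exists>i<length xs. \<exists>j<length xs. xs ! i = xs ! j \<and> t ! i \<noteq> t ! j) \<longrightarrow> pc R xs t = 0))"

text \<open>Input structures are taken with universes of type nat; every finite structure is
  isomorphic to one of these, so this loses no generality.\<close>
definition blp_decides :: "'r set \<Rightarrow> ('r \<Rightarrow> nat) \<Rightarrow> ('a, 'r) struc \<Rightarrow> bool" where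
  "blp_decides sig ar A \<longleftrightarrow>
     (\<forall>X :: (nat, 'r) struc. is_struc sig ar X \<longrightarrow> blp_feasible sig ar X A \<longrightarrow> hom_exists sig X A)"

definition sa1_decides :: "'r set \<Rightarrow> ('r \<Rightarrow> nat) \<Rightarrow> ('a, 'r) struc \<Rightarrow> bool" where
  "sa1_decides sig ar A \<longleftrightarrow>
     (\<forall>X :: (nat, 'r) struc. is_struc sig ar X \<longrightarrow> sa1_feasible sig ar X A \<longrightarrow> hom_exists sig X A)"

definition csp_closed_equiv1 :: "'r set \<Rightarrow> ('r \<Rightarrow> nat) \<Rightarrow> ('a, 'r) struc \<Rightarrow> bool" where
  "csp_closed_equiv1 sig ar A \<longleftrightarrow>
     (\<forall>(X1 :: (nat, 'r) struc) (X2 :: (nat, 'r) struc). is_struc sig ar X1 \<longrightarrow> is_struc sig ar X2 \<longrightarrow>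
        equiv1 sig X1 X2 \<longrightarrow> (hom_exists sig X1 A \<longleftrightarrow> hom_exists sig X2 A))"

definition is_polymorphism :: "'r set \<Rightarrow> ('r \<Rightarrow> nat) \<Rightarrow> ('a, 'r) struc \<Rightarrow> nat \<Rightarrow> ('a list \<Rightarrow> 'a) \<Rightarrow> bool" where
  "is_polymorphism sig ar A k f \<longleftrightarrow>
     (\<forall>xs\<in>tuples A k. f xs \<in> univ A) \<and>
     (\<forall>R\<in>sig. \<forall>ts. length ts = k \<longrightarrow> set ts \<subseteq> rels A R \<longrightarrow>
        map (\<lambda>i. f (map (\<lambda>t. t ! i) ts)) [0..<ar R] \<in> rels A R)"

definition is_symmetric :: "('a, 'r) struc \<Rightarrow> nat \<Rightarrow> ('a list \<Rightarrow> 'a) \<Rightarrow> bool" where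
  "is_symmetric A k f \<longleftrightarrow>
     (\<forall>xs\<in>tuples A k. \<forall>\<rho>. \<rho> permutes {..<k} \<longrightarrow> f xs = f (map (\<lambda>i. xs ! \<rho> i) [0..<k]))"

definition has_all_symmetric_polymorphisms :: "'r set \<Rightarrow> ('r \<Rightarrow> nat) \<Rightarrow> ('a, 'r) struc \<Rightarrow> bool" where
  "has_all_symmetric_polymorphisms sig ar A \<longleftrightarrow>
     (\<forall>k\<ge>1. \<exists>f. is_polymorphism sig ar A k f \<and> is_symmetric A k f)"

end

theory Submission
  imports Defs "HOL-Library.Countable_Set"
begin

definition lst :: "'a multiset \<Rightarrow> 'a list" where
  "lst M = (SOME xs. mset xs = M)"

lemma mset_lst[simp]: "mset (lst M) = M"
  unfolding lst_def by (rule someI_ex) (rule ex_mset)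

lemma length_lst[simp]: "length (lst M) = size M"
  by (metis mset_lst size_mset)

lemma set_lst[simp]: "set (lst M) = set_mset M"
  by (metis mset_lst set_mset_mset)

lemma sym_mset:
  assumes "is_symmetric A k f" "xs \<in> tuples A k" "mset ys = mset xs"
  shows "f ys = f xs"
proof -
  obtain p where p: "p permutes {..<length xs}" "permute_list p xs = ys"
    using mset_eq_permutation[OF assms(3)] by blast
  have lk: "length xs = k" using assms(2) by (simp add: tuples_def)
  have "ys = map (\<lambda>i. xs ! p i) [0..<k]"
    using p(2) lk by (simp add: permute_list_def)
  then show ?thesis using assms(1,2) p(1) lk unfolding is_symmetric_def by metis
qed

lemma tuples_lst: "size M = k \<Longrightarrow> set_mset M \<subseteq> univ A \<Longrightarrow> lst M \<in> tuples A k"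
  by (simp add: tuples_def)

lemma finite_tuples: "finite (univ A) \<Longrightarrow> finite (tuples A n)"
proof -
  assume "finite (univ A)"
  then have "finite {xs. set xs \<subseteq> univ A \<and> length xs = n}"
    by (rule finite_lists_length_eq)
  then show ?thesis unfolding tuples_def by (simp add: conj_commute)
qed

lemma finite_constraints:
  assumes "is_signature sig ar" "is_struc sig ar X"
  shows "finite (constraints sig X)"
proof -
  have "constraints sig X \<subseteq> sig \<times> (\<Union>R\<in>sig. tuples X (ar R))"
    using assms(2) unfolding constraints_def is_struc_def tuples_def by auto
  moreover have "finite (sig \<times> (\<Union>R\<in>sig. tuples X (ar R)))"
    using assms unfolding is_signature_def is_struc_def by (auto intro: finite_tuples)
  ultimately show ?thesis by (rule finite_subset)
qed

lemma image_mset_replicate: "image_mset g (replicate_mset n x) = replicate_mset n (g x)"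
  by (induct n) auto

lemma image_mset_sum_rep:
  "image_mset g (\<Sum>t\<in>S. replicate_mset (n t) t) = (\<Sum>t\<in>S. replicate_mset (n t) (g t))"
  by (induct S rule: infinite_finite_induct) (auto simp: image_mset_replicate)

lemma count_sum_rep:
  "finite S \<Longrightarrow> count (\<Sum>t\<in>S. replicate_mset (n t) (g t)) a = (\<Sum>t\<in>{t\<in>S. g t = a}. n t)"
proof -
  assume fin: "finite S"
  have "count (\<Sum>t\<in>S. replicate_mset (n t) (g t)) a = (\<Sum>t\<in>S. if g t = a then n t else 0)"
    by (simp add: count_sum eq_commute)
  also have "\<dots> = (\<Sum>t\<in>{t\<in>S. g t = a}. n t)" using fin by (simp add: sum.inter_filter)
  finally show ?thesis .
qed

lemma set_sum_rep:
  "finite S \<Longrightarrow> set_mset (\<Sum>t\<in>S. replicate_mset (cnt t) t) \<subseteq> {t\<in>S. cnt t > 0}"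
  by (induct S rule: finite_induct) (auto split: if_splits)

lemma common_denom:
  fixes V :: "rat set"
  assumes "finite V"
  obtains D :: nat where "D > 0" "\<And>q. q \<in> V \<Longrightarrow> \<exists>z::int. of_int z = of_nat D * q"
proof -
  define D where "D = (\<Prod>q\<in>V. nat (snd (quotient_of q)))"
  have pos: "nat (snd (quotient_of q)) > 0" for q using quotient_of_denom_pos' by simp
  have "D > 0" unfolding D_def using pos by (simp add: prod_pos)
  moreover have "\<exists>z::int. of_int z = of_nat D * q" if "q \<in> V" for q
  proof -
    obtain n d where nd: "quotient_of q = (n, d)" by (cases "quotient_of q")
    have dpos: "d > 0" using quotient_of_denom_pos[OF nd] .
    have "nat d dvd D" unfolding D_def using that assms nd
      by (metis dvd_prodI snd_conv)
    then obtain e where e: "D = nat d * e" by (auto elim: dvdE)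
    have "q = of_int n / of_int d" using quotient_of_div[OF nd] .
    then have "of_nat D * q = of_int (n * int e)"
      using e dpos by (simp add: field_simps)
    then show ?thesis by metis
  qed
  ultimately show ?thesis using that by blast
qed

lemma blp_round:
  assumes sg: "is_signature sig ar" and SA: "is_struc sig ar A" and SX: "is_struc sig ar X"
    and symp: "has_all_symmetric_polymorphisms sig ar A"
    and blp: "blp_system sig ar X A px pc"
  shows "hom_exists sig X A"
proof -
  have finA: "finite (univ A)" and finX: "finite (univ X)"
    using SA SX by (auto simp: is_struc_def)
  have finC: "finite (constraints sig X)" using finite_constraints[OF sg SX] .
  define V where "V = (\<Union>x\<in>univ X. \<Union>a\<in>univ A. {px x a}) \<union>
     (\<Union>c\<in>constraints sig X. \<Union>t\<in>tuples A (ar (fst c)). {pc (fst c) (snd c) t})"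
  have finV: "finite V" unfolding V_def using finA finX finC finite_tuples[OF finA] by auto
  obtain D where D: "D > 0" "\<And>q. q \<in> V \<Longrightarrow> \<exists>z::int. of_int z = of_nat D * q"
    using common_denom[OF finV] by blast
  define N where "N q = nat \<lfloor>of_nat D * q\<rfloor>" for q :: rat
  have N: "of_nat (N q) = of_nat D * q" if qV: "q \<in> V" and q0: "q \<ge> 0" for q
  proof -
    obtain z :: int where z: "of_int z = of_nat D * q" using D(2)[OF qV] by blast
    have "z \<ge> 0" using z q0 by (metis of_int_0_le_iff of_nat_0_le_iff mult_nonneg_nonneg)
    then show ?thesis unfolding N_def using z[symmetric] by simp
  qed
  have B1: "\<forall>x\<in>univ X. \<forall>a\<in>univ A. 0 \<le> px x a \<and> px x a \<le> 1"
   and B2: "\<forall>(R, xs)\<in>constraints sig X. \<forall>t\<in>tuples A (ar R). 0 \<le> pc R xs t \<and> pc R xs t \<le> 1"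
   and S1: "\<forall>x\<in>univ X. (\<Sum>a\<in>univ A. px x a) = 1"
   and MG: "\<forall>(R, xs)\<in>constraints sig X. \<forall>a\<in>univ A. \<forall>i<length xs.
        px (xs ! i) a = (\<Sum>t\<in>{t\<in>tuples A (ar R). t ! i = a}. pc R xs t)"
   and Z: "\<forall>(R, xs)\<in>constraints sig X. \<forall>t\<in>tuples A (ar R). t \<notin> rels A R \<longrightarrow> pc R xs t = 0"
    using blp unfolding blp_system_def by blast+
  define Mx where "Mx x = (\<Sum>a\<in>univ A. replicate_mset (N (px x a)) a)" for x
  define T where "T R xs = (\<Sum>t\<in>tuples A (ar R). replicate_mset (N (pc R xs t)) t)" for R xs
  have "\<exists>f. is_polymorphism sig ar A D f \<and> is_symmetric A D f"
    using symp D(1) unfolding has_all_symmetric_polymorphisms_def by simp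
  then obtain f where f: "is_polymorphism sig ar A D f" "is_symmetric A D f" by blast
  have NV1: "of_nat (N (px x a)) = of_nat D * px x a" if "x \<in> univ X" "a \<in> univ A" for x a
    using N[of "px x a"] that B1 unfolding V_def by blast
  have NV2: "of_nat (N (pc R xs t)) = of_nat D * pc R xs t"
    if "(R, xs) \<in> constraints sig X" "t \<in> tuples A (ar R)" for R xs t
  proof -
    have "pc R xs t \<in> V" unfolding V_def using that by force
    moreover have "pc R xs t \<ge> 0" using B2 that by blast
    ultimately show ?thesis using N by blast
  qed
  have sizeMx: "size (Mx x) = D" if "x \<in> univ X" for x
  proof -
    have "rat_of_nat (size (Mx x)) = (\<Sum>a\<in>univ A. of_nat (N (px x a)))"
      unfolding Mx_def by simp
    also have "\<dots> = (\<Sum>a\<in>univ A. of_nat D * px x a)" using NV1 that by simp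
    also have "\<dots> = of_nat D" using S1 that by (simp add: sum_distrib_left[symmetric])
    finally show ?thesis by simp
  qed
  have setMx: "set_mset (Mx x) \<subseteq> univ A" for x
    unfolding Mx_def using set_sum_rep[OF finA, where cnt="\<lambda>a. N (px x a)"] by blast
  define h where "h x = f (lst (Mx x))" for x
  have lstMx: "lst (Mx x) \<in> tuples A D" if "x \<in> univ X" for x
    using tuples_lst[OF sizeMx[OF that] setMx] .
  have hA: "h ` univ X \<subseteq> univ A"
    using f(1) lstMx unfolding is_polymorphism_def h_def by auto
  have hR: "map h xs \<in> rels A R" if R: "R \<in> sig" and xs: "xs \<in> rels X R" for R xs
  proof -
    have c: "(R, xs) \<in> constraints sig X" using R xs by (simp add: constraints_def)
    have lxs: "length xs = ar R" and sxs: "set xs \<subseteq> univ X"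
      using SX R xs unfolding is_struc_def by auto
    define ts where "ts = lst (T R xs)"
    have setT: "set_mset (T R xs) \<subseteq> rels A R"
    proof
      fix t assume "t \<in># T R xs"
      then have t: "t \<in> tuples A (ar R)" "N (pc R xs t) > 0"
        using set_sum_rep[OF finite_tuples[OF finA], where cnt="\<lambda>t. N (pc R xs t)"]
        unfolding T_def by blast+
      then have "pc R xs t \<noteq> 0" unfolding N_def by auto
      then show "t \<in> rels A R" using Z c t(1) by blast
    qed
    have col: "image_mset (\<lambda>t. t ! i) (T R xs) = Mx (xs ! i)" if i: "i < ar R" for i
    proof (rule multiset_eqI)
      fix a
      have xi: "xs ! i \<in> univ X" using sxs i lxs by auto
      have "count (image_mset (\<lambda>t. t ! i) (T R xs)) a
          = (\<Sum>t\<in>{t\<in>tuples A (ar R). t ! i = a}. N (pc R xs t))"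
        unfolding T_def image_mset_sum_rep by (rule count_sum_rep[OF finite_tuples[OF finA]])
      also have "\<dots> = count (Mx (xs ! i)) a"
      proof (cases "a \<in> univ A")
        case True
        have "rat_of_nat (\<Sum>t\<in>{t\<in>tuples A (ar R). t ! i = a}. N (pc R xs t))
            = (\<Sum>t\<in>{t\<in>tuples A (ar R). t ! i = a}. of_nat D * pc R xs t)"
          using NV2[OF c] by simp
        also have "\<dots> = of_nat D * px (xs ! i) a"
        proof -
          have "px (xs ! i) a = (\<Sum>t\<in>{t\<in>tuples A (ar R). t ! i = a}. pc R xs t)"
            using MG c True i lxs by fastforce
          then show ?thesis by (simp add: sum_distrib_left)
        qed
        also have "\<dots> = of_nat (N (px (xs ! i) a))" using NV1[OF xi True] by simp
        finally have "(\<Sum>t\<in>{t\<in>tuples A (ar R). t ! i = a}. N (pc R xs t)) = N (px (xs ! i) a)"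
          by (simp only: of_nat_eq_iff)
        moreover have "count (Mx (xs ! i)) a = N (px (xs ! i) a)"
          unfolding Mx_def using finA True by (simp add: count_sum)
        ultimately show ?thesis by simp
      next
        case False
        have "{t\<in>tuples A (ar R). t ! i = a} = {}"
          using False i unfolding tuples_def by (auto simp: subset_iff)
        moreover have "count (Mx (xs ! i)) a = 0" using setMx False by (meson count_inI subsetD)
        ultimately show ?thesis by (simp only: sum.empty)
      qed
      finally show "count (image_mset (\<lambda>t. t ! i) (T R xs)) a = count (Mx (xs ! i)) a" .
    qed
    have sizeT: "size (T R xs) = D"
    proof -
      have "ar R \<ge> 1" using sg R unfolding is_signature_def by auto
      then have "size (image_mset (\<lambda>t. t ! 0) (T R xs)) = size (Mx (xs ! 0))" using col by simp
      moreover have "xs ! 0 \<in> univ X" using sxs lxs \<open>ar R \<ge> 1\<close> by auto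
      ultimately show ?thesis using sizeMx by simp
    qed
    have lts: "length ts = D" and sts: "set ts \<subseteq> rels A R"
      unfolding ts_def using sizeT setT by auto
    have P: "map (\<lambda>i. f (map (\<lambda>t. t ! i) ts)) [0..<ar R] \<in> rels A R"
      using f(1) R lts sts unfolding is_polymorphism_def by blast
    have "map h xs = map (\<lambda>i. f (map (\<lambda>t. t ! i) ts)) [0..<ar R]"
    proof (rule nth_equalityI)
      show "length (map h xs) = length (map (\<lambda>i. f (map (\<lambda>t. t ! i) ts)) [0..<ar R])"
        using lxs by simp
    next
      fix i assume "i < length (map h xs)"
      then have i: "i < ar R" using lxs by simp
      have "mset (map (\<lambda>t. t ! i) ts) = Mx (xs ! i)"
        using col[OF i] unfolding ts_def by simp
      then have "f (map (\<lambda>t. t ! i) ts) = f (lst (Mx (xs ! i)))"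
        using sym_mset[OF f(2) lstMx] sxs i lxs by (simp add: subset_iff)
      then show "map h xs ! i = map (\<lambda>i. f (map (\<lambda>t. t ! i) ts)) [0..<ar R] ! i"
        using i lxs by (simp add: h_def)
    qed
    then show ?thesis using P by simp
  qed
  show ?thesis unfolding hom_exists_def using hA hR by blast
qed

lemma filter_image_mset_set:
  "finite S \<Longrightarrow> filter_mset P (image_mset g (mset_set S)) = image_mset g (mset_set {x\<in>S. P (g x)})"
  by (simp add: image_mset_filter_mset_swap[symmetric])

lemma size_filter_image_mset_set:
  "finite S \<Longrightarrow> size (filter_mset P (image_mset g (mset_set S))) = card {x\<in>S. P (g x)}"
  by (simp add: filter_image_mset_set)

lemma cons_facts:
  assumes sg: "is_signature sig ar" and SS: "is_struc sig ar S" and c: "c \<in> constraints sig S"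
  shows "snd c \<noteq> []" "set (snd c) \<subseteq> univ S" "fst c \<in> sig" "length (snd c) = ar (fst c)"
    "snd c \<in> rels S (fst c)"
proof -
  obtain R t where ct: "c = (R, t)" "R \<in> sig" "t \<in> rels S R"
    using c unfolding constraints_def by auto
  have "ar R \<ge> 1" using sg ct unfolding is_signature_def by auto
  moreover have "length t = ar R" "set t \<subseteq> univ S" using SS ct unfolding is_struc_def by auto
  ultimately show "snd c \<noteq> []" "set (snd c) \<subseteq> univ S" "fst c \<in> sig" "length (snd c) = ar (fst c)"
    "snd c \<in> rels S (fst c)"
    using ct by auto
qed

lemma delta1_isl:
  assumes sg: "is_signature sig ar" and SS: "is_struc sig ar S" and ST: "is_struc sig ar T"
    and u: "u \<in> fg_vertices sig S" and v: "v \<in> fg_vertices sig T"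
    and eq: "delta sig S (Suc 0) u = delta sig T (Suc 0) v"
  shows "isl u = isl v"
proof (cases u)
  case (Inl a)
  show ?thesis
  proof (cases v)
    case (Inr c')
    have c': "c' \<in> constraints sig T" using v Inr unfolding fg_vertices_def by auto
    obtain b where b: "b \<in> set (snd c')" using cons_facts(1)[OF sg ST c'] by (cases "snd c'") auto
    have "(edge_label c' b, Base True) \<in># image_mset (\<lambda>a. (edge_label c' a, delta sig T 0 (Inl a)))
       (mset_set (set (snd c')))" using b by simp
    then have "(edge_label c' b, Base True) \<in># image_mset (\<lambda>c. (edge_label c a, delta sig S 0 (Inr c)))
       (mset_set {c \<in> constraints sig S. a \<in> set (snd c)})"
      using eq Inl Inr by simp
    then show ?thesis by auto
  qed (simp add: Inl)
next
  case (Inr c)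
  show ?thesis
  proof (cases v)
    case (Inl a)
    have c: "c \<in> constraints sig S" using u Inr unfolding fg_vertices_def by auto
    obtain b where b: "b \<in> set (snd c)" using cons_facts(1)[OF sg SS c] by (cases "snd c") auto
    have m: "image_mset (\<lambda>a. (edge_label c a, delta sig S 0 (Inl a))) (mset_set (set (snd c)))
      = image_mset (\<lambda>c. (edge_label c a, delta sig T 0 (Inr c)))
       (mset_set {c \<in> constraints sig T. a \<in> set (snd c)})"
      using eq Inl Inr by (simp only: delta.simps color.inject)
    have "(edge_label c b, Base True) \<in># image_mset (\<lambda>a. (edge_label c a, delta sig S 0 (Inl a)))
       (mset_set (set (snd c)))" using b by simp
    then have "(edge_label c b, Base True) \<in># image_mset (\<lambda>c. (edge_label c a, delta sig T 0 (Inr c)))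
       (mset_set {c \<in> constraints sig T. a \<in> set (snd c)})"
      unfolding m .
    then show ?thesis by auto
  qed (simp add: Inr)
qed

lemma fg_nbrs:
  assumes sg: "is_signature sig ar" and SS: "is_struc sig ar S"
  shows "c \<in> constraints sig S \<Longrightarrow> a \<in> set (snd c) \<Longrightarrow> Inl a \<in> fg_vertices sig S"
    "c \<in> constraints sig S \<Longrightarrow> Inr c \<in> fg_vertices sig S"
proof -
  show "c \<in> constraints sig S \<Longrightarrow> a \<in> set (snd c) \<Longrightarrow> Inl a \<in> fg_vertices sig S"
    using cons_facts(2)[OF sg SS, of c] unfolding fg_vertices_def by auto
  show "c \<in> constraints sig S \<Longrightarrow> Inr c \<in> fg_vertices sig S"
    unfolding fg_vertices_def by auto
qed

lemma delta_mono:
  assumes sg: "is_signature sig ar" and SS: "is_struc sig ar S"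
  shows "u \<in> fg_vertices sig S \<Longrightarrow> v \<in> fg_vertices sig S \<Longrightarrow>
    delta sig S (Suc j) u = delta sig S (Suc j) v \<Longrightarrow> delta sig S j u = delta sig S j v"
proof (induction j arbitrary: u v)
  case 0
  then have "isl u = isl v" using delta1_isl[OF sg SS SS] by blast
  then show ?case by simp
next
  case (Suc j)
  define V where "V = fg_vertices sig S"
  define g where "g \<gamma> = delta sig S j (SOME w. w \<in> V \<and> delta sig S (Suc j) w = \<gamma>)" for \<gamma>
  have g: "g (delta sig S (Suc j) w) = delta sig S j w" if "w \<in> V" for w
  proof -
    define w' where "w' = (SOME w'. w' \<in> V \<and> delta sig S (Suc j) w' = delta sig S (Suc j) w)"
    have "w' \<in> V \<and> delta sig S (Suc j) w' = delta sig S (Suc j) w"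
      unfolding w'_def by (rule someI[of _ w]) (simp add: that)
    then have "delta sig S j w' = delta sig S j w"
      using Suc.IH[of w' w] that unfolding V_def by blast
    moreover have "g (delta sig S (Suc j) w) = delta sig S j w'" unfolding g_def w'_def by simp
    ultimately show ?thesis by simp
  qed
  define G where "G \<gamma> = (case \<gamma> of Refine M \<Rightarrow> Refine (image_mset (\<lambda>(l, \<gamma>'). (l, g \<gamma>')) M)
     | Base b \<Rightarrow> Base b)" for \<gamma>
  have G: "G (delta sig S (Suc (Suc j)) w) = delta sig S (Suc j) w" if "w \<in> V" for w
  proof (cases w)
    case (Inl a)
    have "image_mset (\<lambda>(l, \<gamma>'). (l, g \<gamma>')) (image_mset (\<lambda>c. (edge_label c a, delta sig S (Suc j) (Inr c)))
       (mset_set {c \<in> constraints sig S. a \<in> set (snd c)}))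
      = image_mset (\<lambda>c. (edge_label c a, delta sig S j (Inr c)))
       (mset_set {c \<in> constraints sig S. a \<in> set (snd c)})"
      unfolding multiset.map_comp
    proof (rule image_mset_cong)
      fix c assume "c \<in># mset_set {c \<in> constraints sig S. a \<in> set (snd c)}"
      then have "c \<in> constraints sig S"
        by (metis (no_types, lifting) elem_mset_set empty_iff infinite_set_mset_mset_set mem_Collect_eq)
      then have "Inr c \<in> V" using fg_nbrs[OF sg SS] V_def by auto
      then show "((\<lambda>(l, \<gamma>'). (l, g \<gamma>')) \<circ> (\<lambda>c. (edge_label c a, delta sig S (Suc j) (Inr c)))) c =
         (edge_label c a, delta sig S j (Inr c))" using g[of "Inr c"] by simp
    qed
    then show ?thesis using Inl by (simp add: G_def)
  next
    case (Inr c)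
    have c: "c \<in> constraints sig S" using that Inr V_def unfolding fg_vertices_def by auto
    have "image_mset (\<lambda>(l, \<gamma>'). (l, g \<gamma>')) (image_mset (\<lambda>a. (edge_label c a, delta sig S (Suc j) (Inl a)))
       (mset_set (set (snd c))))
      = image_mset (\<lambda>a. (edge_label c a, delta sig S j (Inl a))) (mset_set (set (snd c)))"
      unfolding multiset.map_comp
    proof (rule image_mset_cong)
      fix a assume "a \<in># mset_set (set (snd c))"
      then have "Inl a \<in> V" using fg_nbrs[OF sg SS c] V_def by auto
      then show "((\<lambda>(l, \<gamma>'). (l, g \<gamma>')) \<circ> (\<lambda>a. (edge_label c a, delta sig S (Suc j) (Inl a)))) a =
         (edge_label c a, delta sig S j (Inl a))" using g[of "Inl a"] by simp
    qed
    then show ?thesis using Inr by (simp add: G_def)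
  qed
  have "delta sig S (Suc j) u = G (delta sig S (Suc (Suc j)) u)" using G Suc.prems(1) V_def by simp
  also have "\<dots> = G (delta sig S (Suc (Suc j)) v)" using Suc.prems(3) by simp
  also have "\<dots> = delta sig S (Suc j) v" using G Suc.prems(2) V_def by simp
  finally show ?case .
qed

lemma delta_mono_le:
  assumes sg: "is_signature sig ar" and SS: "is_struc sig ar S"
    and u: "u \<in> fg_vertices sig S" and v: "v \<in> fg_vertices sig S"
  shows "j \<le> J \<Longrightarrow> delta sig S J u = delta sig S J v \<Longrightarrow> delta sig S j u = delta sig S j v"
proof (induction J)
  case 0 then show ?case by simp
next
  case (Suc J)
  then show ?case
    using delta_mono[OF sg SS u v] by (cases "j = Suc J") auto
qed

lemma count_col:
  assumes sg: "is_signature sig ar" and SS: "is_struc sig ar S"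
    and y: "y \<in> univ S" and y': "y' \<in> univ S"
    and yy: "\<forall>j. delta sig S j (Inl y) = delta sig S j (Inl y')"
    and c0: "c0 \<in> constraints sig S"
  shows "card {c\<in>constraints sig S. i < length (snd c) \<and> snd c ! i = y \<and>
            (\<forall>j. delta sig S j (Inr c) = delta sig S j (Inr c0))}
       = card {c\<in>constraints sig S. i < length (snd c) \<and> snd c ! i = y' \<and>
            (\<forall>j. delta sig S j (Inr c) = delta sig S j (Inr c0))}"
proof -
  define C where "C = constraints sig S"
  have finC: "finite C" using finite_constraints[OF sg SS] C_def by simp
  define jc where "jc c = (SOME j. delta sig S j (Inr c) \<noteq> delta sig S j (Inr c0))" for c
  define B where "B = {c\<in>C. \<not> (\<forall>j. delta sig S j (Inr c) = delta sig S j (Inr c0))}"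
  define J where "J = Max (insert 0 (jc ` B))"
  have finB: "finite B" using finC B_def by simp
  have key: "(\<forall>j. delta sig S j (Inr c) = delta sig S j (Inr c0)) \<longleftrightarrow>
      delta sig S J (Inr c) = delta sig S J (Inr c0)" if c: "c \<in> C" for c
  proof
    assume "delta sig S J (Inr c) = delta sig S J (Inr c0)"
    show "\<forall>j. delta sig S j (Inr c) = delta sig S j (Inr c0)"
    proof (rule ccontr)
      assume nb: "\<not> (\<forall>j. delta sig S j (Inr c) = delta sig S j (Inr c0))"
      then have cB: "c \<in> B" using c B_def by simp
      have jc: "delta sig S (jc c) (Inr c) \<noteq> delta sig S (jc c) (Inr c0)"
        unfolding jc_def by (rule someI_ex) (use nb in blast)
      have "jc c \<le> J" unfolding J_def using finB cB by (intro Max_ge) auto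
      then have "delta sig S (jc c) (Inr c) = delta sig S (jc c) (Inr c0)"
        using delta_mono_le[OF sg SS] fg_nbrs(2)[OF sg SS] c c0 C_def
          \<open>delta sig S J (Inr c) = delta sig S J (Inr c0)\<close> by blast
      then show False using jc by simp
    qed
  qed simp
  define \<gamma> where "\<gamma> = delta sig S J (Inr c0)"
  have cnt: "card {c\<in>C. i < length (snd c) \<and> snd c ! i = z \<and>
            (\<forall>j. delta sig S j (Inr c) = delta sig S j (Inr c0))}
      = size (filter_mset (\<lambda>(l, \<gamma>'). i \<in> fst l \<and> \<gamma>' = \<gamma>)
          (image_mset (\<lambda>c. (edge_label c z, delta sig S J (Inr c)))
            (mset_set {c \<in> constraints sig S. z \<in> set (snd c)})))" for z
  proof -
    have fin: "finite {c \<in> constraints sig S. z \<in> set (snd c)}" using finC C_def by simp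
    have "{c\<in>C. i < length (snd c) \<and> snd c ! i = z \<and>
            (\<forall>j. delta sig S j (Inr c) = delta sig S j (Inr c0))}
        = {c \<in> {c \<in> constraints sig S. z \<in> set (snd c)}.
            (\<lambda>(l, \<gamma>'). i \<in> fst l \<and> \<gamma>' = \<gamma>) (edge_label c z, delta sig S J (Inr c))}"
      using key by (auto simp: C_def edge_label_def \<gamma>_def)
    then show ?thesis by (simp only: size_filter_image_mset_set[OF fin])
  qed
  have "delta sig S (Suc J) (Inl y) = delta sig S (Suc J) (Inl y')" using yy by blast
  then have "image_mset (\<lambda>c. (edge_label c y, delta sig S J (Inr c)))
            (mset_set {c \<in> constraints sig S. y \<in> set (snd c)}) =
     image_mset (\<lambda>c. (edge_label c y', delta sig S J (Inr c)))
            (mset_set {c \<in> constraints sig S. y' \<in> set (snd c)})" by simp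
  then show ?thesis using cnt[of y] cnt[of y'] C_def by simp
qed

lemma col_rel:
  assumes sg: "is_signature sig ar" and SS: "is_struc sig ar S" and ST: "is_struc sig ar T"
    and c: "c \<in> constraints sig S" and c': "c' \<in> constraints sig T"
    and eq: "delta sig S (Suc 0) (Inr c) = delta sig T (Suc 0) (Inr c')"
  shows "fst c = fst c'"
proof -
  obtain b where b: "b \<in> set (snd c)" using cons_facts(1)[OF sg SS c] by (cases "snd c") auto
  have "(edge_label c b, Base True) \<in># image_mset (\<lambda>a. (edge_label c a, delta sig S 0 (Inl a)))
       (mset_set (set (snd c)))" using b by simp
  moreover have m: "image_mset (\<lambda>a. (edge_label c a, delta sig S 0 (Inl a))) (mset_set (set (snd c)))
      = image_mset (\<lambda>a. (edge_label c' a, delta sig T 0 (Inl a))) (mset_set (set (snd c')))"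
      using eq by (simp only: delta.simps color.inject prod.collapse)
  ultimately have "(edge_label c b, Base True) \<in># image_mset (\<lambda>a. (edge_label c' a, delta sig T 0 (Inl a)))
       (mset_set (set (snd c')))" by metis
  then show ?thesis by (auto simp: edge_label_def)
qed

lemma col_pos:
  fixes sig :: "'r set"
  assumes c: "c \<in> constraints sig S" and c': "c' \<in> constraints sig T"
    and len: "length (snd c) = length (snd c')" and i: "i < length (snd c)"
    and eq: "delta sig S (Suc j) (Inr c) = delta sig T (Suc j) (Inr c')"
  shows "delta sig S j (Inl (snd c ! i)) = delta sig T j (Inl (snd c' ! i))"
proof -
  have one: "filter_mset (\<lambda>(l, \<gamma>). i \<in> fst l)
      (image_mset (\<lambda>a. (edge_label d a, delta sig U j (Inl a))) (mset_set (set (snd d))))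
     = {# (edge_label d (snd d ! i), delta sig U j (Inl (snd d ! i))) #}"
    if "i < length (snd d)" for d :: "'r \<times> 'z list" and U :: "('z, 'r) struc"
  proof -
    have "{a \<in> set (snd d). i \<in> fst (edge_label d a)} = {snd d ! i}"
      using that by (auto simp: edge_label_def)
    then show ?thesis by (simp add: filter_image_mset_set)
  qed
  have "filter_mset (\<lambda>(l, \<gamma>). i \<in> fst l)
      (image_mset (\<lambda>a. (edge_label c a, delta sig S j (Inl a))) (mset_set (set (snd c))))
     = filter_mset (\<lambda>(l, \<gamma>). i \<in> fst l)
      (image_mset (\<lambda>a. (edge_label c' a, delta sig T j (Inl a))) (mset_set (set (snd c'))))"
    using eq by simp
  then show ?thesis using one[of c S] one[of c' T] i len by simp
qed

lemma image_mset_repeat: "image_mset f (repeat_mset n M) = repeat_mset n (image_mset f M)"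
  by (induct n) auto

lemma in_repeat: "x \<in># repeat_mset k M \<Longrightarrow> x \<in># M"
  by (metis count_repeat_mset mult_0_right not_in_iff)

lemma count_image_mset_set:
  assumes "finite S"
  shows "count (image_mset g (mset_set S)) z = card {x\<in>S. g x = z}"
proof -
  have "count (image_mset g (mset_set S)) z = size (filter_mset (\<lambda>w. w = z) (image_mset g (mset_set S)))"
    by (rule count_conv_size_mset)
  also have "\<dots> = card {x\<in>S. g x = z}" using size_filter_image_mset_set[OF assms] by blast
  finally show ?thesis .
qed

lemma col_eq_img:
  assumes "equiv1 sig X1 X2" "finite (fg_vertices sig X1)" "finite (fg_vertices sig X2)"
  shows "(\<lambda>v j. delta sig X1 j v) ` fg_vertices sig X1 = (\<lambda>v j. delta sig X2 j v) ` fg_vertices sig X2"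
proof -
  have "set_mset (image_mset (\<lambda>v j. delta sig X1 j v) (mset_set (fg_vertices sig X1))) =
        set_mset (image_mset (\<lambda>v j. delta sig X2 j v) (mset_set (fg_vertices sig X2)))"
    using assms(1) unfolding equiv1_def by simp
  then show ?thesis using assms(2,3) by simp
qed

lemma finite_fg:
  assumes sg: "is_signature sig ar" and SS: "is_struc sig ar S"
  shows "finite (fg_vertices sig S)"
  using finite_constraints[OF sg SS] SS unfolding fg_vertices_def is_struc_def by auto

lemma sym_closed:
  fixes X1 :: "('x, 'r) struc" and X2 :: "('y, 'r) struc" and A :: "('a, 'r) struc"
  assumes sg: "is_signature sig ar" and SA: "is_struc sig ar A"
    and S1: "is_struc sig ar X1" and S2: "is_struc sig ar X2"
    and symp: "has_all_symmetric_polymorphisms sig ar A"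
    and eqv: "equiv1 sig X1 X2" and hom: "hom_exists sig X1 A"
  shows "hom_exists sig X2 A"
proof -
  obtain h where hh: "h ` univ X1 \<subseteq> univ A \<and> (\<forall>R\<in>sig. \<forall>t\<in>rels X1 R. map h t \<in> rels A R)"
    using hom unfolding hom_exists_def by (elim exE) (rule that)
  have hA: "h ` univ X1 \<subseteq> univ A" using hh by (rule conjunct1)
  have hR: "\<And>R t. R \<in> sig \<Longrightarrow> t \<in> rels X1 R \<Longrightarrow> map h t \<in> rels A R" using hh by simp
  define cv1 where "cv1 v = (\<lambda>j. delta sig X1 j v)" for v
  define cv2 where "cv2 v = (\<lambda>j. delta sig X2 j v)" for v
  have img: "cv1 ` fg_vertices sig X1 = cv2 ` fg_vertices sig X2"
    unfolding cv1_def cv2_def by (rule col_eq_img[OF eqv finite_fg[OF sg S1] finite_fg[OF sg S2]])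
  have finU1: "finite (univ X1)" using S1 by (simp add: is_struc_def)
  have finC1: "finite (constraints sig X1)" by (rule finite_constraints[OF sg S1])
  define K where "K \<kappa> = {z \<in> univ X1. cv1 (Inl z) = \<kappa>}" for \<kappa>
  define n where "n \<kappa> = card (K \<kappa>)" for \<kappa>
  define B where "B = card (univ X1) + card (constraints sig X1)"
  define L :: nat where "L = fact B"
  define H where "H \<kappa> = image_mset h (mset_set (K \<kappa>))" for \<kappa>
  have Lpos: "L \<ge> 1" unfolding L_def by (simp add: Suc_leI fact_gt_zero)
  have "\<exists>f. is_polymorphism sig ar A L f \<and> is_symmetric A L f"
    using symp Lpos unfolding has_all_symmetric_polymorphisms_def by simp
  then obtain f where fP: "is_polymorphism sig ar A L f" and fS: "is_symmetric A L f" by blast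
  have fA: "\<forall>xs\<in>tuples A L. f xs \<in> univ A" using fP unfolding is_polymorphism_def by (rule conjunct1)
  define g where "g y = f (lst (repeat_mset (L div n (cv2 (Inl y))) (H (cv2 (Inl y)))))" for y
  have Kne: "K (cv2 (Inl y)) \<noteq> {}" if y: "y \<in> univ X2" for y
  proof -
    have "Inl y \<in> fg_vertices sig X2" using y unfolding fg_vertices_def by auto
    then obtain u where u: "u \<in> fg_vertices sig X1" "cv1 u = cv2 (Inl y)" using img by force
    have "cv1 u 0 = cv2 (Inl y) 0" using u by simp
    then have "isl u" unfolding cv1_def cv2_def by simp
    then obtain z where "u = Inl z" by (cases u) auto
    then show ?thesis using u unfolding K_def fg_vertices_def by auto
  qed
  have ndvd: "n \<kappa> dvd L" if "K \<kappa> \<noteq> {}" for \<kappa>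
  proof -
    have "K \<kappa> \<subseteq> univ X1" unfolding K_def by auto
    then have "n \<kappa> \<le> card (univ X1)" unfolding n_def using finU1 by (simp add: card_mono)
    moreover have "finite (K \<kappa>)" using finU1 \<open>K \<kappa> \<subseteq> univ X1\<close> finite_subset by blast
    then have "n \<kappa> \<ge> 1" unfolding n_def using that
      by (simp add: Suc_leI card_gt_0_iff)
    ultimately show ?thesis unfolding L_def B_def by (intro dvd_fact) auto
  qed
  have lstok: "lst (repeat_mset (L div n \<kappa>) (H \<kappa>)) \<in> tuples A L" if "K \<kappa> \<noteq> {}" for \<kappa>
  proof (rule tuples_lst)
    have "size (H \<kappa>) = n \<kappa>" unfolding H_def n_def by simp
    then show "size (repeat_mset (L div n \<kappa>) (H \<kappa>)) = L" using ndvd[OF that] by simp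
    have finK: "finite (K \<kappa>)" unfolding K_def using finU1 by simp
    have "set_mset (H \<kappa>) = h ` K \<kappa>" unfolding H_def using finK by simp
    moreover have "K \<kappa> \<subseteq> univ X1" unfolding K_def by blast
    ultimately have "set_mset (H \<kappa>) \<subseteq> h ` univ X1" by blast
    then have HA: "set_mset (H \<kappa>) \<subseteq> univ A" using hA by (rule order_trans)
    show "set_mset (repeat_mset (L div n \<kappa>) (H \<kappa>)) \<subseteq> univ A"
    proof
      fix x assume "x \<in># repeat_mset (L div n \<kappa>) (H \<kappa>)"
      then have "x \<in># H \<kappa>" by (rule in_repeat)
      then show "x \<in> univ A" by (rule subsetD[OF HA])
    qed
  qed
  have gA: "g ` univ X2 \<subseteq> univ A"
  proof
    fix b assume "b \<in> g ` univ X2"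
    then obtain y where y: "y \<in> univ X2" "b = g y" by blast
    show "b \<in> univ A" using fA lstok[OF Kne[OF y(1)]] y(2) unfolding g_def by blast
  qed
  have gR: "map g c \<in> rels A R" if R: "R \<in> sig" and c: "c \<in> rels X2 R" for R c
  proof -
    define cc where "cc = (R, c)"
    have cc: "cc \<in> constraints sig X2" using R c unfolding cc_def constraints_def by simp
    have lc: "length c = ar R" and sc: "set c \<subseteq> univ X2" using S2 R c unfolding is_struc_def by auto
    define \<theta> where "\<theta> = cv2 (Inr cc)"
    define \<Theta> where "\<Theta> = {c'\<in>constraints sig X1. cv1 (Inr c') = \<theta>}"
    have finT: "finite \<Theta>" using finC1 \<Theta>_def by simp
    obtain c0 where c0: "c0 \<in> \<Theta>"
    proof -
      have "Inr cc \<in> fg_vertices sig X2" using cc unfolding fg_vertices_def by auto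
      then obtain u where u: "u \<in> fg_vertices sig X1" "cv1 u = \<theta>" using img \<theta>_def by force
      have "cv1 u 0 = \<theta> 0" using u by simp
      then have "\<not> isl u" unfolding cv1_def cv2_def \<theta>_def by simp
      then obtain c' where "u = Inr c'" by (cases u) auto
      then show ?thesis using u that unfolding \<Theta>_def fg_vertices_def by auto
    qed
    define m where "m = card \<Theta>"
    have mpos: "m \<ge> 1" using c0 finT unfolding m_def by (metis One_nat_def Suc_leI card_gt_0_iff empty_iff)
    have mdvd: "m dvd L"
    proof -
      have "m \<le> card (constraints sig X1)" unfolding m_def \<Theta>_def using finC1 by (simp add: card_mono)
      then show ?thesis unfolding L_def B_def using mpos by (intro dvd_fact) auto
    qed
    have Tc: "c' \<in> constraints sig X1" "fst c' = R" "length (snd c') = ar R" "snd c' \<in> rels X1 R"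
      if "c' \<in> \<Theta>" for c'
    proof -
      show c1: "c' \<in> constraints sig X1" using that \<Theta>_def by simp
      have "cv1 (Inr c') = cv2 (Inr cc)" using that unfolding \<Theta>_def \<theta>_def by simp
      then have "cv1 (Inr c') (Suc 0) = cv2 (Inr cc) (Suc 0)" by (rule fun_cong)
      then have "delta sig X1 (Suc 0) (Inr c') = delta sig X2 (Suc 0) (Inr cc)"
        unfolding cv1_def cv2_def .
      then show f: "fst c' = R" using col_rel[OF sg S1 S2 c1 cc] cc_def by simp
      show "length (snd c') = ar R" using cons_facts(4)[OF sg S1 c1] f by simp
      show "snd c' \<in> rels X1 R" using cons_facts(5)[OF sg S1 c1] f by simp
    qed
    have Tcol: "cv1 (Inl (snd c' ! i)) = cv2 (Inl (c ! i))" if "c' \<in> \<Theta>" "i < ar R" for c' i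
    proof
      fix j
      have "cv1 (Inr c') = cv2 (Inr cc)" using that unfolding \<Theta>_def \<theta>_def by simp
      then have "cv1 (Inr c') (Suc j) = cv2 (Inr cc) (Suc j)" by (rule fun_cong)
      then have "delta sig X1 (Suc j) (Inr c') = delta sig X2 (Suc j) (Inr cc)"
        unfolding cv1_def cv2_def .
      then have "delta sig X1 j (Inl (snd c' ! i)) = delta sig X2 j (Inl (snd cc ! i))"
        using col_pos[OF Tc(1)[OF that(1)] cc] Tc(3)[OF that(1)] that(2) lc cc_def by simp
      then show "cv1 (Inl (snd c' ! i)) j = cv2 (Inl (c ! i)) j" unfolding cv1_def cv2_def cc_def by simp
    qed
    have column: "\<exists>d. image_mset (\<lambda>c'. snd c' ! i) (mset_set \<Theta>) = repeat_mset d (mset_set (K (cv2 (Inl (c ! i)))))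
        \<and> m = d * n (cv2 (Inl (c ! i)))" if i: "i < ar R" for i
    proof -
      define \<kappa> where "\<kappa> = cv2 (Inl (c ! i))"
      define z0 where "z0 = snd c0 ! i"
      define d where "d = card {c'\<in>\<Theta>. snd c' ! i = z0}"
      have inK: "snd c' ! i \<in> K \<kappa>" if "c' \<in> \<Theta>" for c'
      proof -
        have "snd c' ! i \<in> univ X1" using cons_facts(2)[OF sg S1 Tc(1)[OF that]] Tc(3)[OF that] i by auto
        then show ?thesis using Tcol[OF that i] unfolding K_def \<kappa>_def by simp
      qed
      have cntz: "card {c'\<in>\<Theta>. snd c' ! i = z} = d" if z: "z \<in> K \<kappa>" for z
      proof -
        have eqset: "{c'\<in>\<Theta>. snd c' ! i = w} = {c\<in>constraints sig X1. i < length (snd c) \<and> snd c ! i = w \<and>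
            (\<forall>j. delta sig X1 j (Inr c) = delta sig X1 j (Inr c0))}" for w
        proof -
          have "cv1 (Inr c0) = \<theta>" using c0 \<Theta>_def by simp
          then show ?thesis unfolding \<Theta>_def cv1_def using Tc(3) i
            by (auto simp: fun_eq_iff \<Theta>_def cv1_def)
        qed
        have z0K: "z0 \<in> K \<kappa>" using inK[OF c0] z0_def by simp
        have "\<forall>j. delta sig X1 j (Inl z) = delta sig X1 j (Inl z0)"
          using z z0K unfolding K_def cv1_def by (simp add: fun_eq_iff)
        moreover have "z \<in> univ X1" "z0 \<in> univ X1" using z z0K K_def by auto
        ultimately show ?thesis unfolding d_def eqset
          using count_col[OF sg S1 _ _ _ Tc(1)[OF c0]] by blast
      qed
      have eq: "image_mset (\<lambda>c'. snd c' ! i) (mset_set \<Theta>) = repeat_mset d (mset_set (K \<kappa>))"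
      proof (rule multiset_eqI)
        fix z
        have finK: "finite (K \<kappa>)" unfolding K_def using finU1 by simp
        show "count (image_mset (\<lambda>c'. snd c' ! i) (mset_set \<Theta>)) z = count (repeat_mset d (mset_set (K \<kappa>))) z"
        proof (cases "z \<in> K \<kappa>")
          case True
          then show ?thesis using cntz[OF True] finK by (simp add: count_image_mset_set[OF finT])
        next
          case False
          have "{c'\<in>\<Theta>. snd c' ! i = z} = {}" using inK False by auto
          then show ?thesis using False finK by (simp only: count_image_mset_set[OF finT]) simp
        qed
      qed
      moreover have "m = d * n \<kappa>"
      proof -
        have "size (image_mset (\<lambda>c'. snd c' ! i) (mset_set \<Theta>)) = size (repeat_mset d (mset_set (K \<kappa>)))"
          using eq by simp
        then show ?thesis unfolding m_def n_def by simp
      qed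
      ultimately show ?thesis unfolding \<kappa>_def by blast
    qed
    define RM where "RM = repeat_mset (L div m) (image_mset (\<lambda>c'. map h (snd c')) (mset_set \<Theta>))"
    define ts where "ts = lst RM"
    have lts: "length ts = L" unfolding ts_def RM_def using mdvd by (simp add: m_def)
    have sts: "set ts \<subseteq> rels A R"
    proof
      fix t assume "t \<in> set ts"
      then have "t \<in># image_mset (\<lambda>c'. map h (snd c')) (mset_set \<Theta>)"
        unfolding ts_def RM_def set_lst by (rule in_repeat)
      then obtain c' where "c' \<in> \<Theta>" "t = map h (snd c')" using finT by auto
      then show "t \<in> rels A R" using hR[OF R Tc(4)] by simp
    qed
    have P: "map (\<lambda>i. f (map (\<lambda>t. t ! i) ts)) [0..<ar R] \<in> rels A R"
      using fP R lts sts unfolding is_polymorphism_def by blast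
    have "map g c = map (\<lambda>i. f (map (\<lambda>t. t ! i) ts)) [0..<ar R]"
    proof (rule nth_equalityI)
      show "length (map g c) = length (map (\<lambda>i. f (map (\<lambda>t. t ! i) ts)) [0..<ar R])" using lc by simp
    next
      fix i assume "i < length (map g c)"
      then have i: "i < ar R" using lc by simp
      define \<kappa> where "\<kappa> = cv2 (Inl (c ! i))"
      obtain d where d: "image_mset (\<lambda>c'. snd c' ! i) (mset_set \<Theta>) = repeat_mset d (mset_set (K \<kappa>))"
        "m = d * n \<kappa>" using column[OF i] unfolding \<kappa>_def by blast
      have ci: "c ! i \<in> univ X2" using sc i lc by auto
      have KK: "K \<kappa> \<noteq> {}" using Kne[OF ci] \<kappa>_def by simp
      have "mset (map (\<lambda>t. t ! i) ts) = image_mset (\<lambda>t. t ! i) RM" unfolding ts_def by simp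
      also have "\<dots> = repeat_mset (L div m) (image_mset (\<lambda>c'. h (snd c' ! i)) (mset_set \<Theta>))"
        unfolding RM_def image_mset_repeat multiset.map_comp
      proof (rule arg_cong[where f="repeat_mset (L div m)"], rule image_mset_cong)
        fix c' assume "c' \<in># mset_set \<Theta>"
        then have "c' \<in> \<Theta>" using finT by simp
        then show "((\<lambda>t. t ! i) \<circ> (\<lambda>c'. map h (snd c'))) c' = h (snd c' ! i)" using Tc(3) i by simp
      qed
      also have "\<dots> = repeat_mset (L div m) (image_mset h (image_mset (\<lambda>c'. snd c' ! i) (mset_set \<Theta>)))"
        by (simp add: multiset.map_comp comp_def)
      also have "\<dots> = repeat_mset ((L div m) * d) (H \<kappa>)"
        unfolding d(1) image_mset_repeat H_def by simp
      also have "(L div m) * d = L div n \<kappa>"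
      proof -
        obtain q where q: "L = m * q" using mdvd by (auto elim: dvdE)
        have np: "n \<kappa> > 0" using ndvd[OF KK] Lpos by (metis dvd_0_left_iff gr0I not_one_le_zero)
        have "L div m = q" using q mpos by simp
        moreover have "L div n \<kappa> = d * q" using q d(2) np by simp
        ultimately show ?thesis by simp
      qed
      finally have ms: "mset (map (\<lambda>t. t ! i) ts) = mset (lst (repeat_mset (L div n \<kappa>) (H \<kappa>)))" by simp
      have "f (map (\<lambda>t. t ! i) ts) = g (c ! i)"
        unfolding g_def \<kappa>_def[symmetric] using sym_mset[OF fS lstok[OF KK] ms] .
      then show "map g c ! i = map (\<lambda>i. f (map (\<lambda>t. t ! i) ts)) [0..<ar R] ! i"
        using i lc by simp
    qed
    then show ?thesis using P by simp
  qed
  show ?thesis unfolding hom_exists_def using gA gR by blast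
qed

definition cmap :: "('x \<Rightarrow> 'y) \<Rightarrow> 'r \<times> 'x list \<Rightarrow> 'r \<times> 'y list" where
  "cmap p c = (fst c, map p (snd c))"

definition is_cover :: "'r set \<Rightarrow> ('x \<Rightarrow> 'y) \<Rightarrow> nat \<Rightarrow> ('x, 'r) struc \<Rightarrow> ('y, 'r) struc \<Rightarrow> bool" where
  "is_cover sig p k V U \<longleftrightarrow>
     p ` univ V \<subseteq> univ U \<and> (\<forall>u\<in>univ U. card {v\<in>univ V. p v = u} = k) \<and>
     (\<forall>c\<in>constraints sig V. cmap p c \<in> constraints sig U \<and> inj_on p (set (snd c))) \<and>
     (\<forall>d\<in>constraints sig U. card {c\<in>constraints sig V. cmap p c = d} = k) \<and>
     (\<forall>v\<in>univ V. inj_on (cmap p) {c\<in>constraints sig V. v \<in> set (snd c)} \<and>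
        cmap p ` {c\<in>constraints sig V. v \<in> set (snd c)} = {d\<in>constraints sig U. p v \<in> set (snd d)})"

lemma edge_label_cmap:
  assumes "inj_on p (set (snd c))" "v \<in> set (snd c)"
  shows "edge_label (cmap p c) (p v) = edge_label c v"
proof -
  have "{i. i < length (snd c) \<and> map p (snd c) ! i = p v} = {i. i < length (snd c) \<and> snd c ! i = v}"
    using assms unfolding inj_on_def by (auto simp: nth_mem)
  then show ?thesis by (simp add: edge_label_def cmap_def)
qed

lemma cover_delta:
  fixes sig :: "'r set" and V :: "('x, 'r) struc" and U :: "('y, 'r) struc"
  assumes sg: "is_signature sig ar" and SV: "is_struc sig ar V" and SU: "is_struc sig ar U"
    and cov: "is_cover sig p k V U"
  shows "(v \<in> univ V \<longrightarrow> delta sig V j (Inl v) = delta sig U j (Inl (p v))) \<and>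
         (c \<in> constraints sig V \<longrightarrow> delta sig V j (Inr c) = delta sig U j (Inr (cmap p c)))"
proof (induction j arbitrary: v c)
  case 0
  then show ?case by simp
next
  case (Suc j)
  have c1: "cmap p c \<in> constraints sig U" "inj_on p (set (snd c))" if "c \<in> constraints sig V" for c
    using cov that unfolding is_cover_def by auto
  have v1: "inj_on (cmap p) {c\<in>constraints sig V. v \<in> set (snd c)}"
     "cmap p ` {c\<in>constraints sig V. v \<in> set (snd c)} = {d\<in>constraints sig U. p v \<in> set (snd d)}"
    if "v \<in> univ V" for v
    using cov that unfolding is_cover_def by auto
  show ?case
  proof (intro conjI impI)
    assume v: "v \<in> univ V"
    have "image_mset (\<lambda>c. (edge_label c v, delta sig V j (Inr c))) (mset_set {c\<in>constraints sig V. v \<in> set (snd c)})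
       = image_mset (\<lambda>c. (edge_label (cmap p c) (p v), delta sig U j (Inr (cmap p c))))
            (mset_set {c\<in>constraints sig V. v \<in> set (snd c)})"
    proof (rule image_mset_cong)
      fix c assume "c \<in># mset_set {c\<in>constraints sig V. v \<in> set (snd c)}"
      then have c: "c \<in> constraints sig V" "v \<in> set (snd c)"
        using finite_constraints[OF sg SV] by auto
      show "(edge_label c v, delta sig V j (Inr c)) = (edge_label (cmap p c) (p v), delta sig U j (Inr (cmap p c)))"
        using edge_label_cmap[OF c1(2)[OF c(1)] c(2)] Suc.IH c(1) by simp
    qed
    also have "\<dots> = image_mset (\<lambda>d. (edge_label d (p v), delta sig U j (Inr d)))
            (image_mset (cmap p) (mset_set {c\<in>constraints sig V. v \<in> set (snd c)}))"
      by (simp add: multiset.map_comp comp_def)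
    also have "image_mset (cmap p) (mset_set {c\<in>constraints sig V. v \<in> set (snd c)})
        = mset_set {d\<in>constraints sig U. p v \<in> set (snd d)}"
      using image_mset_mset_set[OF v1(1)[OF v]] v1(2)[OF v] by simp
    finally show "delta sig V (Suc j) (Inl v) = delta sig U (Suc j) (Inl (p v))" by simp
  next
    assume c: "c \<in> constraints sig V"
    have sc: "set (snd c) \<subseteq> univ V" using cons_facts(2)[OF sg SV c] .
    have "image_mset (\<lambda>a. (edge_label c a, delta sig V j (Inl a))) (mset_set (set (snd c)))
       = image_mset (\<lambda>a. (edge_label (cmap p c) (p a), delta sig U j (Inl (p a)))) (mset_set (set (snd c)))"
    proof (rule image_mset_cong)
      fix a assume "a \<in># mset_set (set (snd c))"
      then have a: "a \<in> set (snd c)" by simp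
      show "(edge_label c a, delta sig V j (Inl a)) = (edge_label (cmap p c) (p a), delta sig U j (Inl (p a)))"
        using edge_label_cmap[OF c1(2)[OF c] a] Suc.IH a sc by auto
    qed
    also have "\<dots> = image_mset (\<lambda>b. (edge_label (cmap p c) b, delta sig U j (Inl b)))
        (image_mset p (mset_set (set (snd c))))"
      by (simp add: multiset.map_comp comp_def)
    also have "image_mset p (mset_set (set (snd c))) = mset_set (set (snd (cmap p c)))"
      using image_mset_mset_set[OF c1(2)[OF c]] by (simp add: cmap_def)
    finally show "delta sig V (Suc j) (Inr c) = delta sig U (Suc j) (Inr (cmap p c))" by simp
  qed
qed

lemma cover_colours:
  fixes sig :: "'r set" and V :: "('x, 'r) struc" and U :: "('y, 'r) struc"
  assumes sg: "is_signature sig ar" and SV: "is_struc sig ar V" and SU: "is_struc sig ar U"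
    and cov: "is_cover sig p k V U"
  shows "image_mset (\<lambda>v j. delta sig V j v) (mset_set (fg_vertices sig V))
       = repeat_mset k (image_mset (\<lambda>v j. delta sig U j v) (mset_set (fg_vertices sig U)))"
proof -
  define P :: "'x + ('r \<times> 'x list) \<Rightarrow> 'y + ('r \<times> 'y list)" where "P w = (case w of Inl v \<Rightarrow> Inl (p v) | Inr c \<Rightarrow> Inr (cmap p c))" for w
  have finV: "finite (fg_vertices sig V)" and finU: "finite (fg_vertices sig U)"
    using finite_fg[OF sg SV] finite_fg[OF sg SU] .
  have col: "(\<lambda>j. delta sig V j w) = (\<lambda>j. delta sig U j (P w))" if "w \<in> fg_vertices sig V" for w
    using that cover_delta[OF sg SV SU cov] unfolding fg_vertices_def P_def by auto
  have "image_mset (\<lambda>v j. delta sig V j v) (mset_set (fg_vertices sig V))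
      = image_mset (\<lambda>w j. delta sig U j (P w)) (mset_set (fg_vertices sig V))"
    using col finV by (intro image_mset_cong) auto
  also have "\<dots> = image_mset (\<lambda>v j. delta sig U j v) (image_mset P (mset_set (fg_vertices sig V)))"
    by (simp add: multiset.map_comp comp_def)
  also have "image_mset P (mset_set (fg_vertices sig V)) = repeat_mset k (mset_set (fg_vertices sig U))"
  proof (rule multiset_eqI)
    fix u
    have "count (image_mset P (mset_set (fg_vertices sig V))) u = card {w\<in>fg_vertices sig V. P w = u}"
      by (rule count_image_mset_set[OF finV])
    also have "\<dots> = k * count (mset_set (fg_vertices sig U)) u"
    proof (cases u)
      case (Inl b)
      have "{w\<in>fg_vertices sig V. P w = u} = Inl ` {v\<in>univ V. p v = b}"
        by (rule set_eqI, case_tac x) (auto simp: fg_vertices_def P_def Inl)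
      then have e: "card {w\<in>fg_vertices sig V. P w = u} = card {v\<in>univ V. p v = b}"
        by (simp add: card_image)
      show ?thesis
      proof (cases "b \<in> univ U")
        case True
        have "u \<in> fg_vertices sig U" using True Inl by (simp add: fg_vertices_def)
        then have "count (mset_set (fg_vertices sig U)) u = 1" using finU by simp
        moreover have "card {v\<in>univ V. p v = b} = k" using cov True unfolding is_cover_def by blast
        ultimately show ?thesis using e by (simp only: card.empty mult_0_right)
      next
        case False
        have "{v\<in>univ V. p v = b} = {}" using cov False unfolding is_cover_def by auto
        moreover have "u \<notin> fg_vertices sig U" using False Inl by (auto simp: fg_vertices_def)
        then have "count (mset_set (fg_vertices sig U)) u = 0" by simp
        ultimately show ?thesis using e by (simp only: card.empty mult_0_right)
      qed
    next
      case (Inr d)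
      have "{w\<in>fg_vertices sig V. P w = u} = Inr ` {c\<in>constraints sig V. cmap p c = d}"
        by (rule set_eqI, case_tac x) (auto simp: fg_vertices_def P_def Inr)
      then have e: "card {w\<in>fg_vertices sig V. P w = u} = card {c\<in>constraints sig V. cmap p c = d}"
        by (simp add: card_image)
      show ?thesis
      proof (cases "d \<in> constraints sig U")
        case True
        have "u \<in> fg_vertices sig U" using True Inr by (simp add: fg_vertices_def)
        then have "count (mset_set (fg_vertices sig U)) u = 1" using finU by simp
        moreover have "card {c\<in>constraints sig V. cmap p c = d} = k" using cov True unfolding is_cover_def by blast
        ultimately show ?thesis using e by (simp only: card.empty mult_0_right)
      next
        case False
        have "{c\<in>constraints sig V. cmap p c = d} = {}" using cov False unfolding is_cover_def by auto
        moreover have "u \<notin> fg_vertices sig U" using False Inr by (auto simp: fg_vertices_def)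
        then have "count (mset_set (fg_vertices sig U)) u = 0" by simp
        ultimately show ?thesis using e by (simp only: card.empty mult_0_right)
      qed
    qed
    finally show "count (image_mset P (mset_set (fg_vertices sig V))) u =
        count (repeat_mset k (mset_set (fg_vertices sig U))) u" by simp
  qed
  finally show ?thesis by (simp add: image_mset_repeat)
qed

definition ren :: "('x \<Rightarrow> 'y) \<Rightarrow> ('x, 'r) struc \<Rightarrow> ('y, 'r) struc" where
  "ren e X = \<lparr>univ = e ` univ X, rels = (\<lambda>R. map e ` rels X R)\<rparr>"

lemma ren_simps[simp]: "univ (ren e X) = e ` univ X" "rels (ren e X) R = map e ` rels X R"
  by (simp_all add: ren_def)

lemma ren_cons: "constraints sig (ren e X) = cmap e ` constraints sig X"
  unfolding constraints_def cmap_def by force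

lemma ren_struc:
  assumes "is_struc sig ar X"
  shows "is_struc sig ar (ren e X)"
  using assms unfolding is_struc_def by auto

context
  fixes e :: "'x \<Rightarrow> 'y" and X :: "('x, 'r) struc" and sig :: "'r set" and ar
  assumes inj: "inj_on e (univ X)" and SX: "is_struc sig ar X"
begin

definition "pinv = inv_into (univ X) e"

lemma pinv_e[simp]: "x \<in> univ X \<Longrightarrow> pinv (e x) = x"
  unfolding pinv_def using inj by simp

lemma cons_sub: "c \<in> constraints sig X \<Longrightarrow> set (snd c) \<subseteq> univ X"
proof -
  assume "c \<in> constraints sig X"
  then obtain R t where "c = (R, t)" "R \<in> sig" "t \<in> rels X R" by (auto simp: constraints_def)
  then show ?thesis using SX unfolding is_struc_def by auto
qed

lemma map_pinv_e: "set xs \<subseteq> univ X \<Longrightarrow> map pinv (map e xs) = xs"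
  by (induct xs) auto

lemma cmap_pinv: "c \<in> constraints sig X \<Longrightarrow> cmap pinv (cmap e c) = c"
  using map_pinv_e cons_sub by (simp add: cmap_def)

lemma ren_cover: "is_cover sig pinv 1 (ren e X) X"
  unfolding is_cover_def
proof (intro conjI ballI)
  show "pinv ` univ (ren e X) \<subseteq> univ X" by auto
next
  fix u assume u: "u \<in> univ X"
  have "{v \<in> univ (ren e X). pinv v = u} = {e u}" using u by auto
  then show "card {v \<in> univ (ren e X). pinv v = u} = 1" by simp
next
  fix c assume "c \<in> constraints sig (ren e X)"
  then obtain c0 where c0: "c0 \<in> constraints sig X" "c = cmap e c0" using ren_cons by blast
  show "cmap pinv c \<in> constraints sig X" using c0 cmap_pinv by simp
  have "set (snd c) \<subseteq> e ` univ X" using c0 cons_sub[OF c0(1)] by (auto simp: cmap_def)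
  moreover have "inj_on pinv (e ` univ X)" unfolding pinv_def by (rule inj_on_inv_into) simp
  ultimately show "inj_on pinv (set (snd c))" by (rule inj_on_subset[rotated])
next
  fix d assume d: "d \<in> constraints sig X"
  have "{c \<in> constraints sig (ren e X). cmap pinv c = d} = {cmap e d}"
  proof (rule set_eqI, rule iffI)
    fix c assume "c \<in> {c \<in> constraints sig (ren e X). cmap pinv c = d}"
    then obtain c0 where "c0 \<in> constraints sig X" "c = cmap e c0" "cmap pinv c = d" by (auto simp: ren_cons)
    then show "c \<in> {cmap e d}" using cmap_pinv by simp
  next
    fix c assume "c \<in> {cmap e d}"
    then show "c \<in> {c \<in> constraints sig (ren e X). cmap pinv c = d}"
      using d cmap_pinv[OF d] by (simp add: ren_cons)
  qed
  then show "card {c \<in> constraints sig (ren e X). cmap pinv c = d} = 1" by simp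
next
  fix v assume v: "v \<in> univ (ren e X)"
  then obtain u where u: "u \<in> univ X" "v = e u" by auto
  have injc: "inj_on (cmap pinv) (constraints sig (ren e X))"
  proof (rule inj_onI)
    fix x y assume x: "x \<in> constraints sig (ren e X)" and y: "y \<in> constraints sig (ren e X)"
      and xy: "cmap pinv x = cmap pinv y"
    obtain c1 where c1: "c1 \<in> constraints sig X" "x = cmap e c1" using x by (auto simp: ren_cons)
    obtain c2 where c2: "c2 \<in> constraints sig X" "y = cmap e c2" using y by (auto simp: ren_cons)
    have "c1 = cmap pinv x" using cmap_pinv[OF c1(1)] c1(2) by simp
    also have "\<dots> = cmap pinv y" by (rule xy)
    also have "\<dots> = c2" using cmap_pinv[OF c2(1)] c2(2) by simp
    finally have "c1 = c2" .
    then show "x = y" using c1 c2 by simp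
  qed
  then show "inj_on (cmap pinv) {c \<in> constraints sig (ren e X). v \<in> set (snd c)}"
    by (rule inj_on_subset) auto
  have memb: "e u \<in> set (map e t) \<longleftrightarrow> u \<in> set t" if "set t \<subseteq> univ X" for t
    using that u inj by (auto simp: inj_on_def)
  show "cmap pinv ` {c \<in> constraints sig (ren e X). v \<in> set (snd c)} =
        {d \<in> constraints sig X. pinv v \<in> set (snd d)}"
  proof
    show "cmap pinv ` {c \<in> constraints sig (ren e X). v \<in> set (snd c)} \<subseteq> {d \<in> constraints sig X. pinv v \<in> set (snd d)}"
    proof
      fix d assume "d \<in> cmap pinv ` {c \<in> constraints sig (ren e X). v \<in> set (snd c)}"
      then obtain c0 where c0: "c0 \<in> constraints sig X" "v \<in> set (snd (cmap e c0))" "d = cmap pinv (cmap e c0)"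
        by (auto simp: ren_cons)
      then have "d = c0" using cmap_pinv by simp
      moreover have "u \<in> set (snd c0)" using c0(2) memb[OF cons_sub[OF c0(1)]] u(2) by (simp add: cmap_def)
      ultimately show "d \<in> {d \<in> constraints sig X. pinv v \<in> set (snd d)}" using c0(1) u by simp
    qed
  next
    show "{d \<in> constraints sig X. pinv v \<in> set (snd d)} \<subseteq> cmap pinv ` {c \<in> constraints sig (ren e X). v \<in> set (snd c)}"
    proof
      fix d assume d: "d \<in> {d \<in> constraints sig X. pinv v \<in> set (snd d)}"
      then have "u \<in> set (snd d)" using u by simp
      then have "v \<in> set (snd (cmap e d))" using memb[OF cons_sub] d u(2) by (simp add: cmap_def)
      moreover have "cmap e d \<in> constraints sig (ren e X)" using d by (simp add: ren_cons)
      moreover have "d = cmap pinv (cmap e d)" using d cmap_pinv by simp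
      ultimately show "d \<in> cmap pinv ` {c \<in> constraints sig (ren e X). v \<in> set (snd c)}" by blast
    qed
  qed
qed

lemma ren_equiv:
  assumes sg: "is_signature sig ar"
  shows "equiv1 sig (ren e X) X"
  using cover_colours[OF sg ren_struc[OF SX] SX ren_cover] unfolding equiv1_def by simp

lemma ren_hom:
  "hom_exists sig (ren e X) A \<longleftrightarrow> hom_exists sig X A"
proof
  assume "hom_exists sig (ren e X) A"
  then obtain h where h: "h ` univ (ren e X) \<subseteq> univ A" "\<forall>R\<in>sig. \<forall>t\<in>rels (ren e X) R. map h t \<in> rels A R"
    unfolding hom_exists_def by blast
  have "(h \<circ> e) ` univ X \<subseteq> univ A" using h(1) by auto
  moreover have "\<forall>R\<in>sig. \<forall>t\<in>rels X R. map (h \<circ> e) t \<in> rels A R" using h(2) by simp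
  ultimately show "hom_exists sig X A" unfolding hom_exists_def by blast
next
  assume "hom_exists sig X A"
  then obtain h where h: "h ` univ X \<subseteq> univ A" "\<forall>R\<in>sig. \<forall>t\<in>rels X R. map h t \<in> rels A R"
    unfolding hom_exists_def by blast
  have "(h \<circ> pinv) ` univ (ren e X) \<subseteq> univ A" using h(1) by auto
  moreover have "\<forall>R\<in>sig. \<forall>t\<in>rels (ren e X) R. map (h \<circ> pinv) t \<in> rels A R"
  proof (intro ballI)
    fix R t assume R: "R \<in> sig" and "t \<in> rels (ren e X) R"
    then obtain t0 where t0: "t0 \<in> rels X R" "t = map e t0" by auto
    have "set t0 \<subseteq> univ X" using SX R t0(1) unfolding is_struc_def by auto
    then have "map (h \<circ> pinv) t = map h t0" using t0(2) map_pinv_e by (metis map_map)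
    then show "map (h \<circ> pinv) t \<in> rels A R" using h(2) R t0(1) by simp
  qed
  ultimately show "hom_exists sig (ren e X) A" unfolding hom_exists_def by blast
qed

lemma ren_sa1:
  assumes "sa1_feasible sig ar X A"
  shows "sa1_feasible sig ar (ren e X) A"
proof -
  obtain px pc where bs: "blp_system sig ar X A px pc" and sa:
    "\<forall>(R, xs)\<in>constraints sig X. \<forall>t\<in>tuples A (ar R).
        (\<exists>i<length xs. \<exists>j<length xs. xs ! i = xs ! j \<and> t ! i \<noteq> t ! j) \<longrightarrow> pc R xs t = 0"
    using assms unfolding sa1_feasible_def by blast
  define px' where "px' y a = px (pinv y) a" for y a
  define pc' where "pc' R ys t = pc R (map pinv ys) t" for R ys t
  have cons: "(\<forall>c\<in>constraints sig (ren e X). Q c) \<longleftrightarrow> (\<forall>c\<in>constraints sig X. Q (cmap e c))" for Q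
    by (simp add: ren_cons)
  have mp: "map pinv (map e xs) = xs" if "(R, xs) \<in> constraints sig X" for R xs
    using map_pinv_e cons_sub[OF that] by simp
  have nth: "pinv (map e xs ! i) = xs ! i" if "(R, xs) \<in> constraints sig X" "i < length xs" for R xs i
    using cons_sub[OF that(1)] that(2) by (simp add: subset_iff)
  have mp2: "map (pinv \<circ> e) xs = xs" if "(R, xs) \<in> constraints sig X" for R xs
    using mp[OF that] by simp
  have nth2: "pinv (e (xs ! i)) = xs ! i" if "(R, xs) \<in> constraints sig X" "i < length xs" for R xs i
    using nth[OF that] that(2) by simp
  have "blp_system sig ar (ren e X) A px' pc'"
    using bs unfolding blp_system_def
    apply (simp only: cons)
    apply (simp add: cmap_def px'_def pc'_def split_beta)
    apply (auto simp: mp2 nth2)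
    done
  moreover have "\<forall>(R, ys)\<in>constraints sig (ren e X). \<forall>t\<in>tuples A (ar R).
        (\<exists>i<length ys. \<exists>j<length ys. ys ! i = ys ! j \<and> t ! i \<noteq> t ! j) \<longrightarrow> pc' R ys t = 0"
    unfolding cons
  proof
    fix c assume c0: "c \<in> constraints sig X"
    obtain R xs where Rxs: "c = (R, xs)" by (cases c)
    have c: "(R, xs) \<in> constraints sig X" using c0 Rxs by simp
    have "\<forall>t\<in>tuples A (ar R). (\<exists>i<length xs. \<exists>j<length xs. xs ! i = xs ! j \<and> t ! i \<noteq> t ! j)
       \<longrightarrow> pc R xs t = 0" using sa c by fast
    have "(map e xs ! i = map e xs ! j) \<longleftrightarrow> xs ! i = xs ! j" if "i < length xs" "j < length xs" for i j
    proof -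
      have "xs ! i \<in> univ X" "xs ! j \<in> univ X" using cons_sub[OF c] that by (auto simp: subset_iff)
      then show ?thesis using that inj by (simp add: inj_on_eq_iff)
    qed
    have "\<forall>t\<in>tuples A (ar R). (\<exists>i<length (map e xs). \<exists>j<length (map e xs).
        map e xs ! i = map e xs ! j \<and> t ! i \<noteq> t ! j) \<longrightarrow> pc' R (map e xs) t = 0"
    proof (intro ballI impI)
      fix t assume t: "t \<in> tuples A (ar R)" and
        ex: "\<exists>i<length (map e xs). \<exists>j<length (map e xs). map e xs ! i = map e xs ! j \<and> t ! i \<noteq> t ! j"
      then obtain i j where ij: "i < length xs" "j < length xs" "map e xs ! i = map e xs ! j" "t ! i \<noteq> t ! j"
        by auto
      have "xs ! i = xs ! j" using ij \<open>\<And>i j. i < length xs \<Longrightarrow> j < length xs \<Longrightarrow> (map e xs ! i = map e xs ! j) = (xs ! i = xs ! j)\<close>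
        by blast
      then have "pc R xs t = 0" using \<open>\<forall>t\<in>tuples A (ar R). (\<exists>i<length xs. \<exists>j<length xs. xs ! i = xs ! j \<and> t ! i \<noteq> t ! j)
       \<longrightarrow> pc R xs t = 0\<close> t ij by blast
      then show "pc' R (map e xs) t = 0" using mp[OF c] by (simp add: pc'_def)
    qed
    then show "case cmap e c of (R, ys) \<Rightarrow> \<forall>t\<in>tuples A (ar R).
        (\<exists>i<length ys. \<exists>j<length ys. ys ! i = ys ! j \<and> t ! i \<noteq> t ! j) \<longrightarrow> pc' R ys t = 0"
      using Rxs by (simp add: cmap_def)
  qed
  ultimately show ?thesis unfolding sa1_feasible_def by blast
qed

end

definition twc :: "('r \<Rightarrow> 'u list \<Rightarrow> nat \<Rightarrow> nat \<Rightarrow> nat) \<Rightarrow> 'r \<Rightarrow> 'u list \<Rightarrow> nat \<Rightarrow> ('u \<times> nat) list" where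
  "twc P R c m = map (\<lambda>i. (c ! i, P R c i m)) [0..<length c]"

definition Wp :: "('u, 'r) struc \<Rightarrow> nat \<Rightarrow> ('r \<Rightarrow> 'u list \<Rightarrow> nat \<Rightarrow> nat \<Rightarrow> nat) \<Rightarrow> ('u \<times> nat, 'r) struc" where
  "Wp U k P = \<lparr>univ = univ U \<times> {..<k}, rels = (\<lambda>R. {twc P R c m | c m. c \<in> rels U R \<and> m < k})\<rparr>"

lemma Wp_simps[simp]: "univ (Wp U k P) = univ U \<times> {..<k}"
  "rels (Wp U k P) R = {twc P R c m | c m. c \<in> rels U R \<and> m < k}"
  by (simp_all add: Wp_def)

lemma map_fst_twc[simp]: "map fst (twc P R c m) = c"
proof -
  have "map fst (twc P R c m) = map (\<lambda>i. c ! i) [0..<length c]" unfolding twc_def by simp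
  also have "\<dots> = c" by (rule map_nth)
  finally show ?thesis .
qed

lemma length_twc[simp]: "length (twc P R c m) = length c"
  by (simp add: twc_def)

lemma nth_twc[simp]: "i < length c \<Longrightarrow> twc P R c m ! i = (c ! i, P R c i m)"
  by (simp add: twc_def)

lemma set_twc: "set (twc P R c m) = {(c ! i, P R c i m) | i. i < length c}"
  by (auto simp: twc_def)

lemma Wp_cons: "constraints sig (Wp U k P) = {(R, twc P R c m) | R c m. (R, c) \<in> constraints sig U \<and> m < k}"
  unfolding constraints_def by auto

locale permfam =
  fixes sig :: "'r set" and ar :: "'r \<Rightarrow> nat" and U :: "('u, 'r) struc" and k :: nat
    and P :: "'r \<Rightarrow> 'u list \<Rightarrow> nat \<Rightarrow> nat \<Rightarrow> nat"
  assumes sg: "is_signature sig ar" and SU: "is_struc sig ar U"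
    and dist: "\<And>R c. R \<in> sig \<Longrightarrow> c \<in> rels U R \<Longrightarrow> distinct c"
    and perm: "\<And>R c i. R \<in> sig \<Longrightarrow> c \<in> rels U R \<Longrightarrow> i < length c \<Longrightarrow> P R c i permutes {..<k}"
    and kpos: "k \<ge> 1"
begin

lemma lenpos: "R \<in> sig \<Longrightarrow> c \<in> rels U R \<Longrightarrow> length c \<ge> 1"
  using sg SU unfolding is_signature_def is_struc_def by auto

lemma P_lt: "R \<in> sig \<Longrightarrow> c \<in> rels U R \<Longrightarrow> i < length c \<Longrightarrow> m < k \<Longrightarrow> P R c i m < k"
  using permutes_in_image[OF perm] by simp

lemma P_inj: "R \<in> sig \<Longrightarrow> c \<in> rels U R \<Longrightarrow> i < length c \<Longrightarrow> P R c i m = P R c i m' \<Longrightarrow> m = m'"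
  using permutes_inj[OF perm] by (auto dest: injD)

lemma Wp_struc: "is_struc sig ar (Wp U k P)"
  unfolding is_struc_def
proof (intro conjI ballI)
  show "finite (univ (Wp U k P))" using SU by (simp add: is_struc_def)
next
  fix R assume R: "R \<in> sig"
  have "rels U R \<noteq> {}" using SU R unfolding is_struc_def by blast
  then obtain c where c: "c \<in> rels U R" by blast
  then have "twc P R c 0 \<in> rels (Wp U k P) R" using kpos by force
  then show "rels (Wp U k P) R \<noteq> {}" by blast
next
  fix R t assume R: "R \<in> sig" and "t \<in> rels (Wp U k P) R"
  then obtain c m where t: "t = twc P R c m" "c \<in> rels U R" "m < k" by auto
  have lc: "length c = ar R" "set c \<subseteq> univ U" using SU R t(2) unfolding is_struc_def by auto
  show "length t = ar R" using t lc by simp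
  show "set t \<subseteq> univ (Wp U k P)"
    using t lc P_lt[OF R t(2) _ t(3)] by (auto simp: set_twc subset_iff)
qed

lemma Wp_cover: "is_cover sig fst k (Wp U k P) U"
  unfolding is_cover_def
proof (intro conjI ballI)
  show "fst ` univ (Wp U k P) \<subseteq> univ U" by auto
next
  fix u assume "u \<in> univ U"
  then have "{v \<in> univ (Wp U k P). fst v = u} = {u} \<times> {..<k}" by auto
  then show "card {v \<in> univ (Wp U k P). fst v = u} = k" by (simp add: card_cartesian_product)
next
  fix c2 assume "c2 \<in> constraints sig (Wp U k P)"
  then obtain R c m where c2: "c2 = (R, twc P R c m)" "(R, c) \<in> constraints sig U" "m < k"
    by (auto simp: Wp_cons)
  show "cmap fst c2 \<in> constraints sig U" using c2 by (simp add: cmap_def)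
  have R: "R \<in> sig" "c \<in> rels U R" using c2(2) by (auto simp: constraints_def)
  show "inj_on fst (set (snd c2))"
  proof (rule inj_onI)
    fix x y assume "x \<in> set (snd c2)" "y \<in> set (snd c2)" "fst x = fst y"
    then obtain i j where "i < length c" "j < length c" "x = (c ! i, P R c i m)" "y = (c ! j, P R c j m)"
      "c ! i = c ! j" using c2 by (auto simp: set_twc)
    then show "x = y" using dist[OF R] nth_eq_iff_index_eq by metis
  qed
next
  fix d assume d: "d \<in> constraints sig U"
  then obtain R c where Rc: "d = (R, c)" "R \<in> sig" "c \<in> rels U R" by (auto simp: constraints_def)
  have "{c2 \<in> constraints sig (Wp U k P). cmap fst c2 = d} = (\<lambda>m. (R, twc P R c m)) ` {..<k}"
    using d Rc by (auto simp: Wp_cons cmap_def)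
  moreover have "inj_on (\<lambda>m. (R, twc P R c m)) {..<k}"
  proof (rule inj_onI)
    fix m m' assume "(R, twc P R c m) = (R, twc P R c m')"
    then have "twc P R c m ! 0 = twc P R c m' ! 0" by simp
    moreover have l: "0 < length c" using lenpos[OF Rc(2,3)] by linarith
    ultimately have "P R c 0 m = P R c 0 m'" using nth_twc[OF l] by simp
    then show "m = m'" using l P_inj[OF Rc(2,3)] by blast
  qed
  ultimately show "card {c2 \<in> constraints sig (Wp U k P). cmap fst c2 = d} = k"
    by (simp add: card_image)
next
  fix v assume v: "v \<in> univ (Wp U k P)"
  obtain e j where ej: "v = (e, j)" "e \<in> univ U" "j < k" using v by auto
  show "inj_on (cmap fst) {c2 \<in> constraints sig (Wp U k P). v \<in> set (snd c2)}"
  proof (rule inj_onI)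
    fix x y assume x: "x \<in> {c2 \<in> constraints sig (Wp U k P). v \<in> set (snd c2)}"
      and y: "y \<in> {c2 \<in> constraints sig (Wp U k P). v \<in> set (snd c2)}"
      and xy: "cmap fst x = cmap fst y"
    obtain R c m where xc: "x = (R, twc P R c m)" "(R, c) \<in> constraints sig U" "m < k" "v \<in> set (twc P R c m)"
      using x by (auto simp: Wp_cons)
    obtain R' c' m' where yc: "y = (R', twc P R' c' m')" "(R', c') \<in> constraints sig U" "m' < k" "v \<in> set (twc P R' c' m')"
      using y by (auto simp: Wp_cons)
    have eq: "R' = R" "c' = c" using xy xc yc by (auto simp: cmap_def)
    have R: "R \<in> sig" "c \<in> rels U R" using xc(2) by (auto simp: constraints_def)
    obtain i where i: "i < length c" "c ! i = e" "P R c i m = j" using xc(4) ej(1) by (auto simp: set_twc)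
    obtain i' where i': "i' < length c" "c ! i' = e" "P R c i' m' = j" using yc(4) ej(1) eq by (auto simp: set_twc)
    have "i = i'" using i i' dist[OF R] nth_eq_iff_index_eq by metis
    then have "m = m'" using i i' P_inj[OF R i(1)] by simp
    then show "x = y" using xc yc eq by simp
  qed
  show "cmap fst ` {c2 \<in> constraints sig (Wp U k P). v \<in> set (snd c2)} = {d \<in> constraints sig U. fst v \<in> set (snd d)}"
  proof
    show "cmap fst ` {c2 \<in> constraints sig (Wp U k P). v \<in> set (snd c2)} \<subseteq> {d \<in> constraints sig U. fst v \<in> set (snd d)}"
    proof
      fix d assume "d \<in> cmap fst ` {c2 \<in> constraints sig (Wp U k P). v \<in> set (snd c2)}"
      then obtain R c m where "d = (R, c)" "(R, c) \<in> constraints sig U" "v \<in> set (twc P R c m)"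
        by (auto simp: Wp_cons cmap_def)
      then show "d \<in> {d \<in> constraints sig U. fst v \<in> set (snd d)}"
        by (auto simp: set_twc)
    qed
  next
    show "{d \<in> constraints sig U. fst v \<in> set (snd d)} \<subseteq> cmap fst ` {c2 \<in> constraints sig (Wp U k P). v \<in> set (snd c2)}"
    proof
      fix d assume d: "d \<in> {d \<in> constraints sig U. fst v \<in> set (snd d)}"
      then obtain R c where Rc: "d = (R, c)" "R \<in> sig" "c \<in> rels U R" "e \<in> set c"
        using ej by (auto simp: constraints_def)
      obtain i where i: "i < length c" "c ! i = e" using Rc(4) by (auto simp: in_set_conv_nth)
      define m where "m = inv (P R c i) j"
      have pm: "P R c i permutes {..<k}" using perm[OF Rc(2,3) i(1)] .
      have m: "m < k" unfolding m_def using permutes_in_image[OF permutes_inv[OF pm]] ej(3) by simp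
      have Pm: "P R c i m = j" unfolding m_def using permutes_inverses(1)[OF pm] .
      have "v \<in> set (twc P R c m)" using i Pm ej(1) by (auto simp: set_twc)
      moreover have "(R, twc P R c m) \<in> constraints sig (Wp U k P)"
        using Rc m by (auto simp: Wp_cons constraints_def)
      ultimately show "d \<in> cmap fst ` {c2 \<in> constraints sig (Wp U k P). v \<in> set (snd c2)}"
        using Rc(1) by (force simp: cmap_def)
    qed
  qed
qed

end

lemma pigeon:
  assumes fin: "finite B" and ne: "B \<noteq> {}" and hB: "\<And>r. r < N \<Longrightarrow> h r \<in> B"
    and N: "N \<ge> card B * n"
  shows "\<exists>b\<in>B. card {r. r < N \<and> h r = b} \<ge> n"
proof (rule ccontr)
  assume "\<not> (\<exists>b\<in>B. card {r. r < N \<and> h r = b} \<ge> n)"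
  then have lt: "\<And>b. b \<in> B \<Longrightarrow> card {r. r < N \<and> h r = b} < n" by force
  have "{..<N} = (\<Union>b\<in>B. {r. r < N \<and> h r = b})" using hB by auto
  then have "N = card (\<Union>b\<in>B. {r. r < N \<and> h r = b})" by (metis card_lessThan)
  also have "\<dots> = (\<Sum>b\<in>B. card {r. r < N \<and> h r = b})"
    by (rule card_UN_disjoint) (use fin in auto)
  also have "\<dots> < (\<Sum>b\<in>B. n)" by (rule sum_strict_mono[OF fin ne lt])
  also have "\<dots> = card B * n" by simp
  finally show False using N by simp
qed

lemma distinct_choice:
  assumes "\<And>i. i < n \<Longrightarrow> finite (G i) \<and> n \<le> card (G i)"
  shows "\<exists>rr. length rr = n \<and> distinct rr \<and> (\<forall>i<n. rr ! i \<in> G i)"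
proof -
  have "m \<le> n \<Longrightarrow> \<exists>rr. length rr = m \<and> distinct rr \<and> (\<forall>i<m. rr ! i \<in> G i)" for m
  proof (induction m)
    case 0 then show ?case by simp
  next
    case (Suc m)
    then obtain rr where rr: "length rr = m" "distinct rr" "\<forall>i<m. rr ! i \<in> G i" by auto
    have m: "m < n" using Suc.prems by simp
    have "card (set rr) = m" using rr distinct_card by blast
    then have "card (set rr) < card (G m)" using assms[OF m] m by simp
    then have "\<not> G m \<subseteq> set rr" using assms[OF m] by (meson card_mono finite_set not_le)
    then obtain x where x: "x \<in> G m" "x \<notin> set rr" by blast
    have "length (rr @ [x]) = Suc m" using rr by simp
    moreover have "distinct (rr @ [x])" using rr x by simp
    moreover have "\<forall>i<Suc m. (rr @ [x]) ! i \<in> G i"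
      using rr x by (auto simp: nth_append less_Suc_eq)
    ultimately show ?case by blast
  qed
  then show ?thesis by blast
qed

lemma size_sum_count:
  assumes "finite S" "set_mset x \<subseteq> S"
  shows "(\<Sum>a\<in>S. count x a) = size x"
using assms proof (induction x)
  case empty then show ?case by simp
next
  case (add a x)
  have "(\<Sum>b\<in>S. count (add_mset a x) b) = (\<Sum>b\<in>S. count x b + (if b = a then 1 else 0))"
    by (intro sum.cong) auto
  also have "\<dots> = (\<Sum>b\<in>S. count x b) + 1" using add.prems by (simp add: sum.distrib)
  also have "\<dots> = size x + 1" using add by simp
  finally show ?case by simp
qed

lemma count_image_sum:
  assumes "finite T" "set_mset M \<subseteq> T"
  shows "count (image_mset g M) a = (\<Sum>t\<in>{t\<in>T. g t = a}. count M t)"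
using assms proof (induction M)
  case empty then show ?case by simp
next
  case (add b M)
  have "(\<Sum>t\<in>{t\<in>T. g t = a}. count (add_mset b M) t)
      = (\<Sum>t\<in>{t\<in>T. g t = a}. count M t + (if t = b then 1 else 0))"
    by (intro sum.cong) auto
  also have "\<dots> = (\<Sum>t\<in>{t\<in>T. g t = a}. count M t) + (if g b = a then 1 else 0)"
    using add.prems by (simp add: sum.distrib)
  finally show ?case using add by simp
qed

definition colw :: "'a list list \<Rightarrow> nat \<Rightarrow> 'a multiset" where
  "colw ts i = mset (map (\<lambda>t. t ! i) ts)"

definition mkc :: "nat \<Rightarrow> 'a list list \<Rightarrow> nat list \<Rightarrow> ('a multiset \<times> nat) list" where
  "mkc n ts rr = map (\<lambda>i. (colw ts i, rr ! i)) [0..<n]"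

definition validc :: "('a, 'r) struc \<Rightarrow> nat \<Rightarrow> nat \<Rightarrow> ('r \<Rightarrow> nat) \<Rightarrow> 'r \<Rightarrow> 'a list list \<Rightarrow> nat list \<Rightarrow> bool" where
  "validc A k N ar R ts rr \<longleftrightarrow> length ts = k \<and> set ts \<subseteq> rels A R \<and> length rr = ar R \<and> distinct rr \<and> set rr \<subseteq> {..<N}"

definition W1 :: "('r \<Rightarrow> nat) \<Rightarrow> ('a, 'r) struc \<Rightarrow> nat \<Rightarrow> nat \<Rightarrow> ('a multiset \<times> nat, 'r) struc" where
  "W1 ar A k N = \<lparr>univ = mset ` tuples A k \<times> {..<N},
     rels = (\<lambda>R. {mkc (ar R) ts rr | ts rr. validc A k N ar R ts rr})\<rparr>"

lemma W1_simps[simp]: "univ (W1 ar A k N) = mset ` tuples A k \<times> {..<N}"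
  "rels (W1 ar A k N) R = {mkc (ar R) ts rr | ts rr. validc A k N ar R ts rr}"
  by (simp_all add: W1_def)

lemma length_mkc[simp]: "length (mkc n ts rr) = n" by (simp add: mkc_def)
lemma nth_mkc[simp]: "i < n \<Longrightarrow> mkc n ts rr ! i = (colw ts i, rr ! i)" by (simp add: mkc_def)

locale wctx =
  fixes sig :: "'r set" and ar :: "'r \<Rightarrow> nat" and A :: "('a, 'r) struc" and k :: nat
  assumes sg: "is_signature sig ar" and SA: "is_struc sig ar A" and kpos: "k \<ge> 1"
begin

definition "nmax = Max (insert 0 (ar ` sig))"
definition "N = card (univ A) * nmax"
abbreviation "W \<equiv> W1 ar A k N"

lemma finA: "finite (univ A)" using SA by (simp add: is_struc_def)

lemma ar_le: "R \<in> sig \<Longrightarrow> ar R \<le> nmax"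
  unfolding nmax_def using sg unfolding is_signature_def by (intro Max_ge) auto

lemma relA: "R \<in> sig \<Longrightarrow> t \<in> rels A R \<Longrightarrow> length t = ar R \<and> set t \<subseteq> univ A"
  using SA unfolding is_struc_def by auto

lemma ar_le_N: "R \<in> sig \<Longrightarrow> ar R \<le> N"
proof -
  assume R: "R \<in> sig"
  obtain t where t: "t \<in> rels A R" using SA R unfolding is_struc_def by blast
  have "ar R \<ge> 1" using sg R unfolding is_signature_def by auto
  then obtain a where "a \<in> set t" using relA[OF R t] by (cases t) auto
  then have "univ A \<noteq> {}" using relA[OF R t] by auto
  then have "card (univ A) \<ge> 1" using finA by (simp add: Suc_leI card_gt_0_iff)
  then have "nmax \<le> N" unfolding N_def by simp
  then show ?thesis using ar_le[OF R] by simp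
qed

lemma colw_mem: "R \<in> sig \<Longrightarrow> length ts = k \<Longrightarrow> set ts \<subseteq> rels A R \<Longrightarrow> i < ar R \<Longrightarrow>
    colw ts i \<in> mset ` tuples A k"
proof -
  assume R: "R \<in> sig" and l: "length ts = k" and s: "set ts \<subseteq> rels A R" and i: "i < ar R"
  have "map (\<lambda>t. t ! i) ts \<in> tuples A k"
    unfolding tuples_def using l s i relA[OF R] by (auto simp: subset_iff)
  then show ?thesis unfolding colw_def by blast
qed

lemma W_struc: "is_struc sig ar W"
  unfolding is_struc_def
proof (intro conjI ballI)
  show "finite (univ W)" using finite_tuples[OF finA] by simp
next
  fix R assume R: "R \<in> sig"
  obtain t where t: "t \<in> rels A R" using SA R unfolding is_struc_def by blast
  have "validc A k N ar R (replicate k t) [0..<ar R]"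
    unfolding validc_def using t ar_le_N[OF R] by auto
  then have "mkc (ar R) (replicate k t) [0..<ar R] \<in> rels W R" by auto
  then show "rels W R \<noteq> {}" by blast
next
  fix R c assume R: "R \<in> sig" and "c \<in> rels W R"
  then obtain ts rr where c: "c = mkc (ar R) ts rr" "validc A k N ar R ts rr" by auto
  show "length c = ar R" using c by simp
  show "set c \<subseteq> univ W"
  proof
    fix x assume "x \<in> set c"
    then obtain i where i: "i < ar R" "x = (colw ts i, rr ! i)" using c(1) by (auto simp: in_set_conv_nth)
    have "rr ! i < N" using c(2) i unfolding validc_def by (auto simp: subset_iff)
    then show "x \<in> univ W" using colw_mem[OF R _ _ i(1)] c(2) i unfolding validc_def by auto
  qed
qed

lemma W_dist: "R \<in> sig \<Longrightarrow> c \<in> rels W R \<Longrightarrow> distinct c"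
proof -
  assume "c \<in> rels W R"
  then obtain ts rr where c: "c = mkc (ar R) ts rr" "validc A k N ar R ts rr" by auto
  have "distinct rr" "length rr = ar R" using c(2) unfolding validc_def by auto
  moreover have "map snd c = rr"
    using c(1) \<open>length rr = ar R\<close>[symmetric] unfolding mkc_def by (simp add: comp_def map_nth)
  ultimately have "distinct (map snd c)" by simp
  then show ?thesis by (simp add: distinct_map)
qed

end

lemma ball_prodI: "(\<And>a b. (a, b) \<in> S \<Longrightarrow> P a b) \<Longrightarrow> \<forall>(a, b)\<in>S. P a b"
  by auto

context wctx
begin

lemma W_sym:
  assumes hom: "hom_exists sig W A"
  shows "\<exists>f. is_polymorphism sig ar A k f \<and> is_symmetric A k f"
proof -
  obtain h where hh: "h ` univ W \<subseteq> univ A \<and> (\<forall>R\<in>sig. \<forall>t\<in>rels W R. map h t \<in> rels A R)"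
    using hom unfolding hom_exists_def by (elim exE) (rule that)
  have hA: "h (x, r) \<in> univ A" if "x \<in> mset ` tuples A k" "r < N" for x r
    using hh that by auto
  have hR: "map h t \<in> rels A R" if "R \<in> sig" "t \<in> rels W R" for R t
    using hh that by blast
  define v where "v x = (SOME a. a \<in> univ A \<and> nmax \<le> card {r. r < N \<and> h (x, r) = a})" for x
  have v: "v x \<in> univ A \<and> nmax \<le> card {r. r < N \<and> h (x, r) = v x}" if x: "x \<in> mset ` tuples A k" for x
  proof -
    obtain xs where xs: "xs \<in> tuples A k" "x = mset xs" using x by blast
    have "length xs = k" "set xs \<subseteq> univ A" using xs unfolding tuples_def by auto
    then have "univ A \<noteq> {}" using kpos by (cases xs) auto
    then have "\<exists>a\<in>univ A. nmax \<le> card {r. r < N \<and> h (x, r) = a}"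
      by (intro pigeon[where h="\<lambda>r. h (x, r)"]) (use finA hA[OF x] in \<open>auto simp: N_def\<close>)
    then obtain a0 where "a0 \<in> univ A \<and> nmax \<le> card {r. r < N \<and> h (x, r) = a0}" by blast
    then show ?thesis unfolding v_def by (rule someI)
  qed
  define f where "f xs = v (mset xs)" for xs
  have "is_symmetric A k f"
    unfolding is_symmetric_def
  proof (intro ballI allI impI)
    fix xs and \<rho> :: "nat \<Rightarrow> nat" assume xs: "xs \<in> tuples A k" and \<rho>: "\<rho> permutes {..<k}"
    have l: "length xs = k" using xs by (simp add: tuples_def)
    have "map (\<lambda>i. xs ! \<rho> i) [0..<k] = permute_list \<rho> xs" using l by (simp add: permute_list_def)
    then have "mset (map (\<lambda>i. xs ! \<rho> i) [0..<k]) = mset xs" using \<rho> l by simp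
    then show "f xs = f (map (\<lambda>i. xs ! \<rho> i) [0..<k])" unfolding f_def by simp
  qed
  moreover have "is_polymorphism sig ar A k f"
    unfolding is_polymorphism_def
  proof (intro conjI ballI allI impI)
    fix xs assume "xs \<in> tuples A k"
    then show "f xs \<in> univ A" unfolding f_def using v by blast
  next
    fix R ts assume R: "R \<in> sig" and l: "length ts = k" and s: "set ts \<subseteq> rels A R"
    define G where "G i = {r. r < N \<and> h (colw ts i, r) = v (colw ts i)}" for i
    have "finite (G i) \<and> ar R \<le> card (G i)" if i: "i < ar R" for i
    proof -
      have "finite (G i)" unfolding G_def by simp
      moreover have "nmax \<le> card (G i)" unfolding G_def using v[OF colw_mem[OF R l s i]] by blast
      ultimately show ?thesis using ar_le[OF R] by simp
    qed
    then obtain rr where rr: "length rr = ar R" "distinct rr" "\<forall>i<ar R. rr ! i \<in> G i"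
      using distinct_choice[of "ar R" G] by blast
    have "set rr \<subseteq> {..<N}"
    proof
      fix r assume "r \<in> set rr"
      then obtain i where "i < ar R" "r = rr ! i" using rr(1) by (auto simp: in_set_conv_nth)
      then show "r \<in> {..<N}" using rr(3) unfolding G_def by auto
    qed
    then have "validc A k N ar R ts rr" unfolding validc_def using l s rr by simp
    then have "mkc (ar R) ts rr \<in> rels W R" by auto
    then have P: "map h (mkc (ar R) ts rr) \<in> rels A R" using hR[OF R] by simp
    have "map h (mkc (ar R) ts rr) = map (\<lambda>i. f (map (\<lambda>t. t ! i) ts)) [0..<ar R]"
    proof (rule nth_equalityI)
      show "length (map h (mkc (ar R) ts rr)) = length (map (\<lambda>i. f (map (\<lambda>t. t ! i) ts)) [0..<ar R])" by simp
    next
      fix i assume "i < length (map h (mkc (ar R) ts rr))"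
      then have i: "i < ar R" by simp
      have "h (colw ts i, rr ! i) = v (colw ts i)" using rr(3) i unfolding G_def by auto
      then show "map h (mkc (ar R) ts rr) ! i = map (\<lambda>i. f (map (\<lambda>t. t ! i) ts)) [0..<ar R] ! i"
        using i by (simp add: f_def colw_def)
    qed
    then show "map (\<lambda>i. f (map (\<lambda>t. t ! i) ts)) [0..<ar R] \<in> rels A R" using P by simp
  qed
  ultimately show ?thesis by blast
qed

definition tsof :: "'r \<Rightarrow> ('a multiset \<times> nat) list \<Rightarrow> 'a list list" where
  "tsof R c = (SOME ts. \<exists>rr. validc A k N ar R ts rr \<and> c = mkc (ar R) ts rr)"

lemma tsof: "c \<in> rels W R \<Longrightarrow> \<exists>rr. validc A k N ar R (tsof R c) rr \<and> c = mkc (ar R) (tsof R c) rr"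
  unfolding tsof_def by (rule someI_ex) auto

lemma W_sa1: "sa1_feasible sig ar W A"
proof -
  define px where "px y a = (of_nat (count (fst y) a) / of_nat k :: rat)" for y :: "'a multiset \<times> nat" and a
  define pc where "pc R c t = (of_nat (count (mset (tsof R c)) t) / of_nat k :: rat)" for R c t
  have kp: "(of_nat k :: rat) > 0" using kpos by simp
  have cW: "c \<in> rels W R" "R \<in> sig" if "(R, c) \<in> constraints sig W" for R c
    using that by (auto simp: constraints_def)
  have b1: "\<forall>y\<in>univ W. \<forall>a\<in>univ A. 0 \<le> px y a \<and> px y a \<le> 1"
  proof (intro ballI)
    fix y a assume "y \<in> univ W"
    then obtain xs r where "y = (mset xs, r)" "xs \<in> tuples A k" by auto
    then have "count (fst y) a \<le> k" by (simp add: tuples_def) (metis count_le_size size_mset)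
    then show "0 \<le> px y a \<and> px y a \<le> 1" unfolding px_def using kp by (simp add: divide_le_eq_1)
  qed
  have b2: "\<forall>(R, c)\<in>constraints sig W. \<forall>t\<in>tuples A (ar R). 0 \<le> pc R c t \<and> pc R c t \<le> 1"
  proof (rule ball_prodI, intro ballI)
    fix R c t assume "(R, c) \<in> constraints sig W"
    then obtain rr where "validc A k N ar R (tsof R c) rr" using tsof cW by blast
    then have "length (tsof R c) = k" unfolding validc_def by simp
    then have "count (mset (tsof R c)) t \<le> k" by (metis count_le_size size_mset)
    then show "0 \<le> pc R c t \<and> pc R c t \<le> 1" unfolding pc_def using kp by (simp add: divide_le_eq_1)
  qed
  have s1: "\<forall>y\<in>univ W. (\<Sum>a\<in>univ A. px y a) = 1"
  proof
    fix y assume "y \<in> univ W"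
    then obtain xs r where y: "y = (mset xs, r)" "xs \<in> tuples A k" by auto
    have "(\<Sum>a\<in>univ A. count (mset xs) a) = size (mset xs)"
      using y(2) by (intro size_sum_count[OF finA]) (auto simp: tuples_def)
    then have "(\<Sum>a\<in>univ A. count (mset xs) a) = k" using y(2) by (simp add: tuples_def)
    then have "(\<Sum>a\<in>univ A. (of_nat (count (mset xs) a) :: rat)) = of_nat k"
      by (metis of_nat_sum)
    then show "(\<Sum>a\<in>univ A. px y a) = 1" unfolding px_def y(1) using kp
      by (simp add: sum_divide_distrib[symmetric])
  qed
  have mg: "\<forall>(R, c)\<in>constraints sig W. \<forall>a\<in>univ A. \<forall>i<length c.
        px (c ! i) a = (\<Sum>t\<in>{t\<in>tuples A (ar R). t ! i = a}. pc R c t)"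
  proof (rule ball_prodI, intro ballI allI impI)
    fix R c a i assume Rc: "(R, c) \<in> constraints sig W" and a: "a \<in> univ A" and i: "i < length c"
    obtain rr where rr: "validc A k N ar R (tsof R c) rr" "c = mkc (ar R) (tsof R c) rr"
      using tsof cW[OF Rc] by blast
    define ts where "ts = tsof R c"
    have "length c = ar R" by (subst rr(2)) simp
    then have iR: "i < ar R" using i by simp
    have sts: "set_mset (mset ts) \<subseteq> tuples A (ar R)"
      using rr(1) relA[OF cW(2)[OF Rc]] unfolding validc_def ts_def tuples_def by auto
    have "count (colw ts i) a = count (image_mset (\<lambda>t. t ! i) (mset ts)) a" by (simp add: colw_def)
    also have "\<dots> = (\<Sum>t\<in>{t\<in>tuples A (ar R). t ! i = a}. count (mset ts) t)"
      by (rule count_image_sum[OF finite_tuples[OF finA] sts])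
    finally have "(of_nat (count (colw ts i) a) :: rat) = (\<Sum>t\<in>{t\<in>tuples A (ar R). t ! i = a}. of_nat (count (mset ts) t))"
      by simp
    moreover have ci: "c ! i = (colw ts i, rr ! i)" by (subst rr(2)) (simp add: iR ts_def)
    ultimately show "px (c ! i) a = (\<Sum>t\<in>{t\<in>tuples A (ar R). t ! i = a}. pc R c t)"
      unfolding px_def pc_def ts_def by (simp add: sum_divide_distrib[symmetric])
  qed
  have zr: "\<forall>(R, c)\<in>constraints sig W. \<forall>t\<in>tuples A (ar R). t \<notin> rels A R \<longrightarrow> pc R c t = 0"
  proof (rule ball_prodI, intro ballI impI)
    fix R c t assume Rc: "(R, c) \<in> constraints sig W" and "t \<notin> rels A R"
    obtain rr where "validc A k N ar R (tsof R c) rr" using tsof cW[OF Rc] by blast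
    then have "t \<notin> set (tsof R c)" using \<open>t \<notin> rels A R\<close> unfolding validc_def by auto
    then show "pc R c t = 0" unfolding pc_def by (simp add: count_eq_zero_iff)
  qed
  have sa: "\<forall>(R, c)\<in>constraints sig W. \<forall>t\<in>tuples A (ar R).
        (\<exists>i<length c. \<exists>j<length c. c ! i = c ! j \<and> t ! i \<noteq> t ! j) \<longrightarrow> pc R c t = 0"
  proof (rule ball_prodI, intro ballI impI)
    fix R c and t :: "'a list" assume Rc: "(R, c) \<in> constraints sig W"
      and ex: "\<exists>i<length c. \<exists>j<length c. c ! i = c ! j \<and> t ! i \<noteq> t ! j"
    have "distinct c" using W_dist cW[OF Rc] by blast
    then show "pc R c t = 0" using ex nth_eq_iff_index_eq by metis
  qed
  have "blp_system sig ar W A px pc" unfolding blp_system_def using b1 b2 s1 mg zr by blast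
  then show ?thesis unfolding sa1_feasible_def using sa by blast
qed

end

context wctx
begin

definition perm2 :: "'r \<Rightarrow> ('a multiset \<times> nat) list \<Rightarrow> nat \<Rightarrow> nat \<Rightarrow> nat" where
  "perm2 R c i = (SOME p. p permutes {..<k} \<and> permute_list p (lst (fst (c ! i))) = map (\<lambda>t. t ! i) (tsof R c))"

lemma perm2:
  assumes R: "R \<in> sig" and c: "c \<in> rels W R" and i: "i < length c"
  shows "perm2 R c i permutes {..<k} \<and> permute_list (perm2 R c i) (lst (fst (c ! i))) = map (\<lambda>t. t ! i) (tsof R c)"
proof -
  obtain rr where rr: "validc A k N ar R (tsof R c) rr" "c = mkc (ar R) (tsof R c) rr"
    using tsof[OF c] by blast
  define ts where "ts = tsof R c"
  have "length c = ar R" by (subst rr(2)) simp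
  then have iR: "i < ar R" using i by simp
  have ci: "c ! i = (colw ts i, rr ! i)" by (subst rr(2)) (simp add: iR ts_def)
  have lts: "length ts = k" using rr(1) unfolding validc_def ts_def by simp
  have "mset (map (\<lambda>t. t ! i) ts) = mset (lst (colw ts i))" by (simp add: colw_def)
  then obtain p where p: "p permutes {..<length (lst (colw ts i))}"
    "permute_list p (lst (colw ts i)) = map (\<lambda>t. t ! i) ts"
    by (rule mset_eq_permutation)
  have "length (lst (colw ts i)) = k" using lts by (simp add: colw_def)
  then have "p permutes {..<k} \<and> permute_list p (lst (fst (c ! i))) = map (\<lambda>t. t ! i) (tsof R c)"
    using p ci ts_def by simp
  then show ?thesis unfolding perm2_def
    by (rule someI[where P="\<lambda>p. p permutes {..<k} \<and> permute_list p (lst (fst (c ! i))) = map (\<lambda>t. t ! i) (tsof R c)"])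
qed

abbreviation "W2 \<equiv> Wp W k perm2"
abbreviation "W3 \<equiv> Wp W k (\<lambda>R c i m. m)"

lemma pf2: "permfam sig ar W k perm2"
  by (unfold_locales) (use sg W_struc W_dist perm2 kpos in auto)

lemma pf3: "permfam sig ar W k (\<lambda>R c i m. m)"
proof -
  have "(\<lambda>m. m) permutes {..<k}" using permutes_id unfolding id_def .
  then show ?thesis by (unfold_locales) (use sg W_struc W_dist kpos in auto)
qed

lemma W2_struc: "is_struc sig ar W2" using permfam.Wp_struc[OF pf2] .
lemma W3_struc: "is_struc sig ar W3" using permfam.Wp_struc[OF pf3] .

lemma W23_equiv: "equiv1 sig W2 W3"
  unfolding equiv1_def
  using cover_colours[OF sg W2_struc W_struc permfam.Wp_cover[OF pf2]]
    cover_colours[OF sg W3_struc W_struc permfam.Wp_cover[OF pf3]] by simp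

lemma W2_hom: "hom_exists sig W2 A"
proof -
  define h2 where "h2 y = lst (fst (fst y)) ! snd y" for y :: "('a multiset \<times> nat) \<times> nat"
  have "h2 ` univ W2 \<subseteq> univ A"
  proof
    fix b assume "b \<in> h2 ` univ W2"
    then obtain xs r j where y: "xs \<in> tuples A k" "r < N" "j < k" "b = lst (mset xs) ! j"
      unfolding h2_def by auto
    have "length (lst (mset xs)) = k" using y(1) by (simp add: tuples_def)
    then have "lst (mset xs) ! j \<in> set (lst (mset xs))" using y(3) by (intro nth_mem) simp
    then have "b \<in> set xs" using y(4) by simp
    then show "b \<in> univ A" using y(1) by (auto simp: tuples_def)
  qed
  moreover have "map h2 t \<in> rels A R" if R: "R \<in> sig" and t: "t \<in> rels W2 R" for R t
  proof -
    obtain c m where cm: "t = twc perm2 R c m" "c \<in> rels W R" "m < k" using t by auto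
    obtain rr where rr: "validc A k N ar R (tsof R c) rr" "c = mkc (ar R) (tsof R c) rr"
      using tsof[OF cm(2)] by blast
    define ts where "ts = tsof R c"
    have lc: "length c = ar R" by (subst rr(2)) simp
    have lts: "length ts = k" and sts: "set ts \<subseteq> rels A R" using rr(1) unfolding validc_def ts_def by auto
    have tm: "ts ! m \<in> rels A R" using sts lts cm(3) by (simp add: subset_iff)
    have ltm: "length (ts ! m) = ar R" using relA[OF R tm] by simp
    have "map h2 t = ts ! m"
    proof (rule nth_equalityI)
      show "length (map h2 t) = length (ts ! m)" using cm(1) lc ltm by simp
    next
      fix i assume "i < length (map h2 t)"
      then have i: "i < length c" using cm(1) by simp
      have p: "perm2 R c i permutes {..<k}" "permute_list (perm2 R c i) (lst (fst (c ! i))) = map (\<lambda>t. t ! i) ts"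
        using perm2[OF R cm(2) i] ts_def by auto
      have "length (lst (fst (c ! i))) = k"
        using arg_cong[OF p(2), of length] lts by simp
      then have "lst (fst (c ! i)) ! perm2 R c i m = permute_list (perm2 R c i) (lst (fst (c ! i))) ! m"
        using permute_list_nth[of "perm2 R c i" "lst (fst (c ! i))" m] p(1) cm(3) by simp
      also have "\<dots> = ts ! m ! i" using p(2) cm(3) lts by simp
      finally show "map h2 t ! i = ts ! m ! i" using cm(1) i by (simp add: h2_def)
    qed
    then show ?thesis using tm by simp
  qed
  ultimately show ?thesis unfolding hom_exists_def by blast
qed

lemma W3_hom: "hom_exists sig W3 A \<Longrightarrow> hom_exists sig W A"
proof -
  assume "hom_exists sig W3 A"
  then obtain h where hh: "h ` univ W3 \<subseteq> univ A \<and> (\<forall>R\<in>sig. \<forall>t\<in>rels W3 R. map h t \<in> rels A R)"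
    unfolding hom_exists_def by (elim exE) (rule that)
  define h1 where "h1 x = h (x, 0::nat)" for x
  have "h1 ` univ W \<subseteq> univ A" using hh kpos unfolding h1_def by auto
  moreover have "map h1 c \<in> rels A R" if R: "R \<in> sig" and c: "c \<in> rels W R" for R c
  proof -
    have "twc (\<lambda>R c i m. m) R c 0 \<in> rels W3 R" using c kpos by force
    then have "map h (twc (\<lambda>R c i m. m) R c 0) \<in> rels A R" using hh R by blast
    moreover have "map h (twc (\<lambda>R c i m. m) R c 0) = map h1 c"
    proof -
      have "map h (twc (\<lambda>R c i m. m) R c 0) = map h1 (map (\<lambda>i. c ! i) [0..<length c])"
        unfolding twc_def h1_def by simp
      also have "map (\<lambda>i. c ! i) [0..<length c] = c" by (rule map_nth)
      finally show ?thesis .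
    qed
    ultimately show ?thesis by simp
  qed
  ultimately show ?thesis unfolding hom_exists_def by blast
qed

end

lemma enc_inj: "finite S \<Longrightarrow> inj_on (to_nat_on S) S"
  by (intro inj_on_to_nat_on countable_finite)

lemma sa1_imp_sym:
  fixes A :: "('a, 'r) struc"
  assumes sg: "is_signature sig ar" and SA: "is_struc sig ar A" and dec: "sa1_decides sig ar A"
  shows "has_all_symmetric_polymorphisms sig ar A"
  unfolding has_all_symmetric_polymorphisms_def
proof (intro allI impI)
  fix k :: nat assume k: "k \<ge> 1"
  interpret wctx sig ar A k using sg SA k by unfold_locales
  define e where "e = to_nat_on (univ W)"
  have fin: "finite (univ W)" using W_struc by (simp add: is_struc_def)
  have inj: "inj_on e (univ W)" unfolding e_def using enc_inj[OF fin] .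
  have "is_struc sig ar (ren e W)" by (rule ren_struc[OF W_struc])
  moreover have "sa1_feasible sig ar (ren e W) A" by (rule ren_sa1[OF inj W_struc W_sa1])
  ultimately have "hom_exists sig (ren e W) A" using dec unfolding sa1_decides_def by blast
  then have "hom_exists sig W A" using ren_hom[OF inj W_struc] by blast
  then show "\<exists>f. is_polymorphism sig ar A k f \<and> is_symmetric A k f" by (rule W_sym)
qed

lemma closed_imp_sym:
  fixes A :: "('a, 'r) struc"
  assumes sg: "is_signature sig ar" and SA: "is_struc sig ar A" and cl: "csp_closed_equiv1 sig ar A"
  shows "has_all_symmetric_polymorphisms sig ar A"
  unfolding has_all_symmetric_polymorphisms_def
proof (intro allI impI)
  fix k :: nat assume k: "k \<ge> 1"
  interpret wctx sig ar A k using sg SA k by unfold_locales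
  define e2 where "e2 = to_nat_on (univ W2)"
  define e3 where "e3 = to_nat_on (univ W3)"
  have "finite (univ W2)" using W2_struc unfolding is_struc_def by (rule conjunct1)
  then have inj2: "inj_on e2 (univ W2)" unfolding e2_def by (rule enc_inj)
  have "finite (univ W3)" using W3_struc unfolding is_struc_def by (rule conjunct1)
  then have inj3: "inj_on e3 (univ W3)" unfolding e3_def by (rule enc_inj)
  have s2: "is_struc sig ar (ren e2 W2)" by (rule ren_struc[OF W2_struc])
  have s3: "is_struc sig ar (ren e3 W3)" by (rule ren_struc[OF W3_struc])
  have "equiv1 sig (ren e2 W2) (ren e3 W3)"
    using ren_equiv[OF inj2 W2_struc sg] ren_equiv[OF inj3 W3_struc sg] W23_equiv
    unfolding equiv1_def by simp
  moreover have "hom_exists sig (ren e2 W2) A" using ren_hom[OF inj2 W2_struc] W2_hom by blast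
  ultimately have "hom_exists sig (ren e3 W3) A" using cl s2 s3 unfolding csp_closed_equiv1_def by blast
  then have "hom_exists sig W3 A" using ren_hom[OF inj3 W3_struc] by blast
  then have "hom_exists sig W A" by (rule W3_hom)
  then show "\<exists>f. is_polymorphism sig ar A k f \<and> is_symmetric A k f" by (rule W_sym)
qed

theorem theorem5p2:
  fixes sig :: "'r set" and ar :: "'r \<Rightarrow> nat" and A :: "('a, 'r) struc"
  assumes "is_signature sig ar"
    and "is_struc sig ar A"
  shows "(csp_closed_equiv1 sig ar A \<longleftrightarrow> sa1_decides sig ar A)
       \<and> (sa1_decides sig ar A \<longleftrightarrow> blp_decides sig ar A)
       \<and> (blp_decides sig ar A \<longleftrightarrow> has_all_symmetric_polymorphisms sig ar A)"
proof -
  note sg = assms(1) and SA = assms(2)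
  have s2b: "has_all_symmetric_polymorphisms sig ar A \<Longrightarrow> blp_decides sig ar A"
    unfolding blp_decides_def blp_feasible_def using blp_round[OF sg SA] by blast
  have b2s: "blp_decides sig ar A \<Longrightarrow> sa1_decides sig ar A"
    unfolding blp_decides_def sa1_decides_def blp_feasible_def sa1_feasible_def by blast
  have s2c: "has_all_symmetric_polymorphisms sig ar A \<Longrightarrow> csp_closed_equiv1 sig ar A"
  proof -
    assume sp: "has_all_symmetric_polymorphisms sig ar A"
    show ?thesis unfolding csp_closed_equiv1_def
    proof (intro allI impI)
      fix X1 X2 :: "(nat, 'r) struc"
      assume S1: "is_struc sig ar X1" and S2: "is_struc sig ar X2" and eq: "equiv1 sig X1 X2"
      have eq': "equiv1 sig X2 X1" using eq unfolding equiv1_def by simp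
      show "hom_exists sig X1 A \<longleftrightarrow> hom_exists sig X2 A"
        using sym_closed[OF sg SA S1 S2 sp eq] sym_closed[OF sg SA S2 S1 sp eq'] by blast
    qed
  qed
  have c2s: "csp_closed_equiv1 sig ar A \<Longrightarrow> has_all_symmetric_polymorphisms sig ar A"
    by (rule closed_imp_sym[OF sg SA])
  have a2s: "sa1_decides sig ar A \<Longrightarrow> has_all_symmetric_polymorphisms sig ar A"
    by (rule sa1_imp_sym[OF sg SA])
  show ?thesis using s2b b2s s2c c2s a2s by blast
qed

end
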